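(* Let $m,n$ be relatively prime positive integers and $\pi$ an $(m,n)$-Dyck path. Then \[ h_+(\pi)-\frac{(m-1)(n-1)}2-\sum_{v\in v^*(\pi)} k(v) \;=\; -\sum_{p\in i(\pi)\cup v_*(\pi)} k(p). \]
   Context: An $(m,n)$-Dyck path is a lattice path from $(0,0)$ to $(m,n)$ with steps $(1,0)$ (horizontal) and $(0,1)$ (vertical) staying weakly above the diagonal $y=\frac nm x$. "The line through a point $p$" means the line through $p$ parallel to the diagonal. For a lattice point $p$, $k(p)$ is the number of vertical steps of $\pi$ not containing $p$ that the line through $p$ intersects. An outer vertex of $\pi$ is a vertex where a vertical step is followed by a horizontal step, an internal vertex one where a horizontal step is followed by a vertical step; $v^*(\pi)$ is the set of outer vertices except the one farthest from the diagonal, and $v_*(\pi)$ is the set of internal vertices. $i(\pi)$ is the set of lattice points lying strictly between $\pi$ and the diagonal. $h_+(\pi)$ is the number of pairs $(s_1,s_2)$ with $s_1$ a horizontal step, $s_2$ a vertical step of $\pi$, $s_1$ to the left of $s_2$, such that some line parallel to the diagonal intersects both $s_1$ and $s_2$. *)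

theory Defs
  imports "HOL-Analysis.Analysis"
begin

text \<open>A lattice path is a list of steps: True = vertical step (0,1), False = horizontal step (1,0).
  Vertex i is the lattice point reached after the first i steps (vertices 0 .. length P).\<close>

definition vtx :: "bool list \<Rightarrow> nat \<Rightarrow> int \<times> int" where
  "vtx P i = (int (length (filter Not (take i P))), int (length (filter id (take i P))))"

definition rpt :: "int \<times> int \<Rightarrow> real \<times> real" where
  "rpt p = (real_of_int (fst p), real_of_int (snd p))"

definition dyck_path :: "nat \<Rightarrow> nat \<Rightarrow> bool list \<Rightarrow> bool" where
  "dyck_path m n P \<longleftrightarrow> length (filter Not P) = m \<and> length (filter id P) = n \<and>
     (\<forall>i \<le> length P. int n * fst (vtx P i) \<le> int m * snd (vtx P i))"

definition step_seg :: "bool list \<Rightarrow> nat \<Rightarrow> (real \<times> real) set" where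
  "step_seg P i = closed_segment (rpt (vtx P i)) (rpt (vtx P (Suc i)))"

definition diag_line :: "nat \<Rightarrow> nat \<Rightarrow> real \<Rightarrow> (real \<times> real) set" where
  "diag_line m n c = {q. real n * fst q - real m * snd q = c}"

definition line_through :: "nat \<Rightarrow> nat \<Rightarrow> int \<times> int \<Rightarrow> (real \<times> real) set" where
  "line_through m n p = diag_line m n (real n * fst (rpt p) - real m * snd (rpt p))"

definition kval :: "nat \<Rightarrow> nat \<Rightarrow> bool list \<Rightarrow> int \<times> int \<Rightarrow> nat" where
  "kval m n P p = card {i. i < length P \<and> P ! i \<and> rpt p \<notin> step_seg P i \<and>
       line_through m n p \<inter> step_seg P i \<noteq> {}}"

definition outer_vertices :: "bool list \<Rightarrow> (int \<times> int) set" where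
  "outer_vertices P = {vtx P (Suc i) | i. Suc i < length P \<and> P ! i \<and> \<not> P ! Suc i}"

definition internal_vertices :: "bool list \<Rightarrow> (int \<times> int) set" where
  "internal_vertices P = {vtx P (Suc i) | i. Suc i < length P \<and> \<not> P ! i \<and> P ! Suc i}"

definition diag_dist :: "nat \<Rightarrow> nat \<Rightarrow> int \<times> int \<Rightarrow> real" where
  "diag_dist m n p = \<bar>real n * fst (rpt p) - real m * snd (rpt p)\<bar> / sqrt ((real m)\<^sup>2 + (real n)\<^sup>2)"

definition vstar :: "nat \<Rightarrow> nat \<Rightarrow> bool list \<Rightarrow> (int \<times> int) set" where
  "vstar m n P = outer_vertices P -
     {v \<in> outer_vertices P. \<forall>w \<in> outer_vertices P. diag_dist m n w \<le> diag_dist m n v}"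

definition inner_points :: "nat \<Rightarrow> nat \<Rightarrow> bool list \<Rightarrow> (int \<times> int) set" where
  "inner_points m n P = {(a, b). 0 \<le> a \<and> a \<le> int m \<and> int n * a < int m * b \<and>
      (\<forall>j \<le> length P. fst (vtx P j) = a \<longrightarrow> b < snd (vtx P j))}"

definition h_plus :: "nat \<Rightarrow> nat \<Rightarrow> bool list \<Rightarrow> nat" where
  "h_plus m n P = card {(i, j). i < length P \<and> j < length P \<and> \<not> P ! i \<and> P ! j \<and>
      fst (vtx P i) < fst (vtx P j) \<and>
      (\<exists>c. diag_line m n c \<inter> step_seg P i \<noteq> {} \<and> diag_line m n c \<inter> step_seg P j \<noteq> {})}"

end

theory Submission
  imports Defs
begin


locale mnl =
  fixes m n :: nat
  assumes m0: "0 < m" and n0: "0 < n" and cop: "coprime m n"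
begin

definition dl :: "nat \<Rightarrow> nat" where "dl d = n * d div m + 1"

lemma nd_not_dvd: assumes "0 < d" "d < m" shows "\<not> m dvd n * d"
proof
  assume "m dvd n * d"
  hence "m dvd d" using cop by (simp add: coprime_dvd_mult_right_iff)
  thus False using assms by (simp add: nat_dvd_not_less)
qed

lemma dl_bounds: assumes "0 < d" "d < m"
  shows "m * (dl d - 1) < n * d" "n * d < m * dl d" "dl d \<le> n" "1 \<le> dl d"
proof -
  have nd: "\<not> m dvd n * d" using nd_not_dvd assms by auto
  have e: "m * (n * d div m) + n * d mod m = n * d" by (rule mult_div_mod_eq)
  have dd: "dl d - 1 = n * d div m" "dl d = n * d div m + 1" by (simp_all add: dl_def)
  have r0: "n * d mod m > 0" using nd by (simp add: dvd_eq_mod_eq_0)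
  show "m * (dl d - 1) < n * d" unfolding dd(1) using e r0 by linarith
  have r1: "n * d mod m < m" using m0 by simp
  have "m * (n * d div m + 1) = m * (n * d div m) + m" by simp
  thus "n * d < m * dl d" unfolding dd(2) using e r1 by linarith
  have "n * d div m < n" using assms m0 n0
    by (simp add: div_less_iff_less_mult mult.commute)
  thus "dl d \<le> n" unfolding dd by simp
  show "1 \<le> dl d" unfolding dd by simp
qed

lemma dl_sym: assumes "0 < d" "d < m" shows "dl (m - d) = n + 1 - dl d"
proof -
  define q where "q = n * d div m"
  define r where "r = n * d mod m"
  have e: "m * q + r = n * d" unfolding q_def r_def by (rule mult_div_mod_eq)
  have r0: "r > 0" using nd_not_dvd[OF assms] unfolding r_def by (simp add: dvd_eq_mod_eq_0)
  have r1: "r < m" using m0 unfolding r_def by simp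
  have qn: "q < n" using assms m0 n0 unfolding q_def by (simp add: div_less_iff_less_mult mult.commute)
  define k where "k = n - q - 1"
  have k: "n = q + 1 + k" using qn unfolding k_def by simp
  define t where "t = m - d"
  have t: "m = d + t" using assms unfolding t_def by simp
  have "n * (m - d) div m = n - q - 1"
  proof (rule div_nat_eqI)
    have ee: "q * t + r = d + d * k" using e unfolding k t by (simp add: algebra_simps)
    have g1: "d * k \<le> q * t + t" using ee r1 t by linarith
    have g2: "q * t < d + d * k" using ee r0 by linarith
    have kk: "n - q - 1 = k" by (simp add: k_def)
    have tt: "m - d = t" by (simp add: t_def)
    have h1: "m * (n - q - 1) = d * k + t * k" unfolding kk t by (simp add: distrib_right)
    have h2: "n * (m - d) = q * t + t + k * t" unfolding tt k by (simp add: distrib_right)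
    have h3: "m * Suc (n - q - 1) = d + d * k + t + t * k" unfolding kk t by (simp add: distrib_right distrib_left)
    show "m * (n - q - 1) \<le> n * (m - d)" unfolding h1 h2 using g1 by (simp add: mult.commute)
    show "n * (m - d) < m * Suc (n - q - 1)" unfolding h3 h2 using g2 by (simp add: mult.commute)
  qed
  thus ?thesis unfolding dl_def q_def[symmetric] using qn by simp
qed



lemma dl_bounds_int: assumes "0 < d" "d < m"
  shows "int m * (int (dl d) - 1) < int n * int d" "int n * int d < int m * int (dl d)"
proof -
  have b: "m * (dl d - 1) < n * d" "n * d < m * dl d" "1 \<le> dl d" using dl_bounds assms by auto
  show "int m * (int (dl d) - 1) < int n * int d" using b(1) b(3)
    by (metis of_nat_1 of_nat_diff of_nat_less_iff of_nat_mult)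
  show "int n * int d < int m * int (dl d)" using b(2) by (metis of_nat_less_iff of_nat_mult)
qed

lemma dl_unique: assumes "0 < d" "d < m"
  and "- int m \<le> int n * int d - int m * e" "int n * int d - int m * e \<le> 0"
  shows "e = int (dl d)"
proof -
  have b: "m * (dl d - 1) < n * d" "n * d < m * dl d" "1 \<le> dl d" using dl_bounds assms by auto
  have b1: "int m * (int (dl d) - 1) < int n * int d" using b(1) b(3)
    by (metis of_nat_1 of_nat_diff of_nat_less_iff of_nat_mult)
  have b2: "int n * int d < int m * int (dl d)" using b(2) by (metis of_nat_less_iff of_nat_mult)
  have "int m * (int (dl d) - 1) < int m * e" using b1 assms(4) by linarith
  hence l1: "int (dl d) - 1 < e" using m0 by (simp add: mult_less_cancel_left_pos)
  have "int m * e < int m * (int (dl d) + 1)" using b2 assms(3) by (simp add: algebra_simps)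
  hence l2: "e < int (dl d) + 1" using m0 by (simp add: mult_less_cancel_left_pos)
  show ?thesis using l1 l2 by linarith
qed

end

locale p4 = mnl +
  fixes X :: "nat \<Rightarrow> nat"
  assumes mono: "\<And>y z. y \<le> z \<Longrightarrow> z < n \<Longrightarrow> X y \<le> X z"
    and dy: "\<And>y. y < n \<Longrightarrow> n * X y \<le> m * y"
begin

definition Xe :: "nat \<Rightarrow> nat" where
  "Xe z = (if z < n then X z else X (z - n) + m)"

definition T :: "nat \<Rightarrow> nat \<Rightarrow> bool" where
  "T d r \<longleftrightarrow> Xe (r + dl d) \<le> X r + d"
definition T2 :: "nat \<Rightarrow> nat \<Rightarrow> bool" where
  "T2 d r \<longleftrightarrow> Xe (r + dl d - 1) < X r + d"

definition cnt :: "nat \<Rightarrow> nat" where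
  "cnt d = (\<Sum>y<n. if X y + d < m then of_bool (T d y) else of_bool (T2 d y))"

definition thr :: "nat \<Rightarrow> nat" where
  "thr c = (LEAST y. y = n \<or> (y < n \<and> c \<le> X y))"

lemma thr_le: "thr c \<le> n"
  unfolding thr_def by (rule Least_le) simp

lemma thr_iff: assumes "y < n" shows "X y < c \<longleftrightarrow> y < thr c"
proof
  assume a: "X y < c"
  show "y < thr c"
  proof (rule ccontr)
    assume "\<not> y < thr c"
    hence le: "thr c \<le> y" by simp
    have "thr c = n \<or> (thr c < n \<and> c \<le> X (thr c))"
      unfolding thr_def by (rule LeastI[of _ n]) simp
    thus False using le assms a mono[of "thr c" y] by auto
  qed
next
  assume "y < thr c"
  hence "\<not> (y = n \<or> (y < n \<and> c \<le> X y))" unfolding thr_def by (rule not_less_Least)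
  thus "X y < c" using assms by auto
qed

lemma X0: "X 0 = 0" using dy[of 0] n0 by simp

lemma Xlt: assumes "y < n" shows "X y < m"
proof -
  have "n * X y \<le> m * y" using dy assms by simp
  also have "\<dots> < m * n" using assms m0 by simp
  finally have "n * X y < n * m" by (simp add: mult.commute)
  thus ?thesis by simp
qed

context
  fixes d :: nat
  assumes d0: "0 < d" and dm: "d < m"
begin

lemma y2_ge: "dl d \<le> thr d"
proof (rule ccontr)
  assume "\<not> dl d \<le> thr d"
  hence lt: "thr d < dl d" by simp
  have "thr d < n" using lt dl_bounds[OF d0 dm] by simp
  hence "\<not> X (thr d) < d" using thr_iff by simp
  moreover have "n * X (thr d) < n * d"
  proof -
    have "n * X (thr d) \<le> m * thr d" using dy \<open>thr d < n\<close> by simp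
    also have "\<dots> \<le> m * (dl d - 1)" using lt by (intro mult_le_mono2) simp
    also have "\<dots> < n * d" using dl_bounds[OF d0 dm] by simp
    finally show ?thesis .
  qed
  ultimately show False by simp
qed

lemma y1_gt: "X (n - dl d) < m - d"
proof -
  have b: "n * d < m * dl d" "dl d \<le> n" "1 \<le> dl d" using dl_bounds[OF d0 dm] by auto
  have "n * X (n - dl d) \<le> m * (n - dl d)" using dy b n0 by simp
  also have "\<dots> = m * n - m * dl d" by (simp add: diff_mult_distrib2)
  also have "\<dots> < m * n - n * d"
  proof (rule diff_less_mono2)
    show "n * d < m * dl d" by (rule b(1))
    show "n * d < m * n" using dm n0 by (simp add: mult.commute)
  qed
  also have "\<dots> = n * m - n * d" by (simp add: mult.commute)
  also have "\<dots> = n * (m - d)" by (simp add: diff_mult_distrib2)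
  finally show ?thesis by simp
qed

lemma y1_gt': "n - dl d < thr (m - d)"
  using y1_gt thr_iff[of "n - dl d" "m - d"] dl_bounds[OF d0 dm] n0 by simp

definition F :: "nat \<Rightarrow> nat" where
  "F r = (if r < thr (m - d) then of_bool (T d r) else of_bool (T2 d r))"
definition U :: "nat \<Rightarrow> nat" where
  "U r = (if r = n - dl d then 0 else if thr d - dl d \<le> r \<and> r < n - dl d then of_bool (\<not> T d r)
     else of_bool (\<not> T2 d r))"

lemma FU: assumes r: "r < n" shows "F r + U r = (if r = n - dl d then 0 else 1)"
proof -
  have b: "n * d < m * dl d" "dl d \<le> n" "1 \<le> dl d" using dl_bounds[OF d0 dm] by auto
  have y2: "dl d \<le> thr d" "thr d \<le> n" using y2_ge thr_le by auto
  have y1: "n - dl d < thr (m - d)" by (rule y1_gt')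
  show ?thesis
  proof (cases "r = n - dl d")
    case True
    have "\<not> T d r"
    proof -
      have "Xe (r + dl d) = m" using True b X0 unfolding Xe_def by simp
      moreover have "X r + d < m" using y1_gt True dm by simp
      ultimately show ?thesis unfolding T_def by simp
    qed
    thus ?thesis using True y1 unfolding F_def U_def by simp
  next
    case ne: False
    show ?thesis
    proof (cases "r < thr d - dl d")
      case a: True
      have rd: "r + dl d < thr d" using a y2 by simp
      have xd: "X (r + dl d) < d" using thr_iff[of "r + dl d" d] rd y2 by simp
      have t1: "T d r" unfolding T_def Xe_def using rd y2 xd by simp
      have rn: "r + dl d - 1 < n" using rd y2 by simp
      have t2: "T2 d r" unfolding T2_def Xe_def using rn rd y2 xd mono[of "r + dl d - 1" "r + dl d"] b by simp
      show ?thesis unfolding F_def U_def using ne a t1 t2 by simp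
    next
      case na: False
      show ?thesis
      proof (cases "r < n - dl d")
        case b2: True
        have tt: "r \<ge> thr (m - d) \<Longrightarrow> T d r \<and> T2 d r"
        proof -
          assume "r \<ge> thr (m - d)"
          hence "\<not> X r < m - d" using thr_iff r by simp
          hence xr: "m \<le> X r + d" by simp
          have "X (r + dl d) < m" using Xlt b2 by simp
          moreover have "X (r + dl d - 1) < m" using Xlt b2 b by simp
          moreover have "r + dl d < n" "r + dl d - 1 < n" using b2 b by auto
          ultimately show ?thesis unfolding T_def T2_def Xe_def using xr by simp
        qed
        show ?thesis unfolding F_def U_def using ne na b2 tt by auto
      next
        case b3: False
        hence gt: "n - dl d < r" using ne by simp
        have tt: "r < thr (m - d) \<Longrightarrow> \<not> T d r \<and> \<not> T2 d r"
        proof -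
          assume "r < thr (m - d)"
          hence "X r < m - d" using thr_iff[of r "m - d"] r by simp
          hence xr: "X r + d < m" by simp
          have "n \<le> r + dl d - 1" using gt b by simp
          hence "m \<le> Xe (r + dl d - 1)" "m \<le> Xe (r + dl d)" unfolding Xe_def by auto
          thus ?thesis unfolding T_def T2_def using xr by simp
        qed
        show ?thesis unfolding F_def U_def using ne na b3 tt by auto
      qed
    qed
  qed
qed

lemma T2_y2: "T2 d (thr d - dl d)"
proof -
  have b: "dl d \<le> n" "1 \<le> dl d" using dl_bounds[OF d0 dm] by auto
  have y2: "dl d \<le> thr d" "thr d \<le> n" using y2_ge thr_le by auto
  have "X (thr d - 1) < d" using thr_iff[of "thr d - 1" d] y2 b by simp
  moreover have "thr d - dl d + dl d - 1 = thr d - 1" using y2 by simp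
  moreover have "thr d - 1 < n" using y2 b by simp
  ultimately show ?thesis unfolding T2_def Xe_def using y2 b by simp
qed

lemma cnt_F: "cnt d = (\<Sum>r<n. F r)"
  unfolding cnt_def F_def
proof (rule sum.cong[OF refl])
  fix y assume "y \<in> {..<n}"
  hence "X y + d < m \<longleftrightarrow> y < thr (m - d)" using thr_iff[of y "m - d"] by auto
  thus "(if X y + d < m then of_bool (T d y) else of_bool (T2 d y)) =
        (if y < thr (m - d) then of_bool (T d y) else of_bool (T2 d y))" by simp
qed

definition G :: "nat \<Rightarrow> nat" where
  "G y = (if X y + (m - d) < m then of_bool (T (m - d) y) else of_bool (T2 (m - d) y))"

lemma cnt_G: "cnt (m - d) = (\<Sum>y<n. G y)" unfolding cnt_def G_def ..

lemma G_A: assumes "thr d \<le> y" "y < n" shows "G y = of_bool (\<not> T d (y - dl d))"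
proof -
  have b: "dl d \<le> n" "1 \<le> dl d" using dl_bounds[OF d0 dm] by auto
  have y2: "dl d \<le> thr d" using y2_ge by auto
  have xy: "d \<le> X y" using thr_iff[of y d] assms by simp
  have ds: "dl (m - d) = n + 1 - dl d" by (rule dl_sym[OF d0 dm])
  have e1: "y + dl (m - d) - 1 = (y - dl d) + n" using ds assms y2 b by simp
  have e2: "y - dl d + dl d = y" using assms y2 by simp
  have "T2 (m - d) y \<longleftrightarrow> X (y - dl d) + d < X y"
    unfolding T2_def Xe_def e1 using xy dm by auto
  moreover have "T d (y - dl d) \<longleftrightarrow> X y \<le> X (y - dl d) + d"
    unfolding T_def Xe_def e2 using assms by simp
  ultimately show ?thesis unfolding G_def using xy dm by auto
qed

lemma G_B: assumes "r < thr d + 1 - dl d" shows "G (r + (dl d - 1)) = of_bool (\<not> T2 d r)"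
proof -
  have b: "dl d \<le> n" "1 \<le> dl d" using dl_bounds[OF d0 dm] by auto
  have y2: "dl d \<le> thr d" "thr d \<le> n" using y2_ge thr_le by auto
  define y where "y = r + (dl d - 1)"
  have yl: "y < thr d" "y < n" using assms y2 b unfolding y_def by auto
  have xy: "X y < d" using thr_iff[of y d] yl by simp
  have ds: "dl (m - d) = n + 1 - dl d" by (rule dl_sym[OF d0 dm])
  have e1: "y + dl (m - d) = r + n" using ds b unfolding y_def by simp
  have e2: "r + dl d - 1 = y" using b unfolding y_def by simp
  have "T (m - d) y \<longleftrightarrow> X r + d \<le> X y"
    unfolding T_def Xe_def e1 using dm by auto
  moreover have "T2 d r \<longleftrightarrow> X y < X r + d"
    unfolding T2_def Xe_def e2 using yl by simp
  ultimately show ?thesis unfolding G_def y_def[symmetric] using xy dm by auto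
qed

lemma G_C: assumes "y < dl d - 1" shows "G y = of_bool (\<not> T2 d (y + (n + 1 - dl d)))"
proof -
  have b: "dl d \<le> n" "1 \<le> dl d" using dl_bounds[OF d0 dm] by auto
  have y2: "dl d \<le> thr d" "thr d \<le> n" using y2_ge thr_le by auto
  have yl: "y < thr d" "y < n" using assms y2 b by auto
  have xy: "X y < d" using thr_iff[of y d] yl by simp
  have ds: "dl (m - d) = n + 1 - dl d" by (rule dl_sym[OF d0 dm])
  define r where "r = y + (n + 1 - dl d)"
  have rl: "r < n" using assms b unfolding r_def by simp
  have e1: "y + dl (m - d) = r" using ds b unfolding r_def by simp
  have e2: "r + dl d - 1 = y + n" using b unfolding r_def by simp
  have "T (m - d) y \<longleftrightarrow> X r \<le> X y + (m - d)"
    unfolding T_def Xe_def e1 using rl by simp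
  moreover have "T2 d r \<longleftrightarrow> X y + m < X r + d"
    unfolding T2_def Xe_def e2 using yl by simp
  ultimately show ?thesis unfolding G_def r_def[symmetric] using xy dm by auto
qed

lemma cnt_md: "cnt (m - d) = (\<Sum>r\<in>{thr d - dl d..<n - dl d}. of_bool (\<not> T d r))
   + (\<Sum>r\<in>{0..<thr d + 1 - dl d}. of_bool (\<not> T2 d r))
   + (\<Sum>r\<in>{n + 1 - dl d..<n}. of_bool (\<not> T2 d r))"
proof -
  have b: "dl d \<le> n" "1 \<le> dl d" using dl_bounds[OF d0 dm] by auto
  have y2: "dl d \<le> thr d" "thr d \<le> n" using y2_ge thr_le by auto
  have split: "(\<Sum>y<n. G y) = (\<Sum>y\<in>{0..<dl d - 1}. G y) + (\<Sum>y\<in>{dl d - 1..<thr d}. G y)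
      + (\<Sum>y\<in>{thr d..<n}. G y)"
    unfolding lessThan_atLeast0 using y2 b
    by (simp add: sum.atLeastLessThan_concat)
  have A: "(\<Sum>y\<in>{thr d..<n}. G y) = (\<Sum>r\<in>{thr d - dl d..<n - dl d}. of_bool (\<not> T d r))"
  proof -
    have "(\<Sum>y\<in>{thr d..<n}. G y) = (\<Sum>y\<in>{(thr d - dl d) + dl d..<(n - dl d) + dl d}. G y)"
      using y2 b by simp
    also have "\<dots> = (\<Sum>r\<in>{thr d - dl d..<n - dl d}. G (r + dl d))"
      by (rule sum.shift_bounds_nat_ivl)
    also have "\<dots> = (\<Sum>r\<in>{thr d - dl d..<n - dl d}. of_bool (\<not> T d r))"
      by (rule sum.cong[OF refl]) (use G_A y2 b in auto)
    finally show ?thesis .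
  qed
  have B: "(\<Sum>y\<in>{dl d - 1..<thr d}. G y) = (\<Sum>r\<in>{0..<thr d + 1 - dl d}. of_bool (\<not> T2 d r))"
  proof -
    have "(\<Sum>y\<in>{dl d - 1..<thr d}. G y) = (\<Sum>y\<in>{0 + (dl d - 1)..<(thr d + 1 - dl d) + (dl d - 1)}. G y)"
      using y2 b by simp
    also have "\<dots> = (\<Sum>r\<in>{0..<thr d + 1 - dl d}. G (r + (dl d - 1)))"
      by (rule sum.shift_bounds_nat_ivl)
    also have "\<dots> = (\<Sum>r\<in>{0..<thr d + 1 - dl d}. of_bool (\<not> T2 d r))"
      by (rule sum.cong[OF refl]) (use G_B in auto)
    finally show ?thesis .
  qed
  have C: "(\<Sum>y\<in>{0..<dl d - 1}. G y) = (\<Sum>r\<in>{n + 1 - dl d..<n}. of_bool (\<not> T2 d r))"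
  proof -
    have "(\<Sum>r\<in>{n + 1 - dl d..<n}. of_bool (\<not> T2 d r)) =
      (\<Sum>r\<in>{0 + (n + 1 - dl d)..<(dl d - 1) + (n + 1 - dl d)}. of_bool (\<not> T2 d r))"
      using y2 b by simp
    also have "\<dots> = (\<Sum>y\<in>{0..<dl d - 1}. of_bool (\<not> T2 d (y + (n + 1 - dl d))))"
      by (rule sum.shift_bounds_nat_ivl)
    also have "\<dots> = (\<Sum>y\<in>{0..<dl d - 1}. G y)"
      by (rule sum.cong[OF refl]) (use G_C in auto)
    finally show ?thesis by simp
  qed
  show ?thesis unfolding cnt_G split A B C by simp
qed

lemma sum_U: "(\<Sum>r<n. U r) = (\<Sum>r\<in>{thr d - dl d..<n - dl d}. of_bool (\<not> T d r))
   + (\<Sum>r\<in>{0..<thr d + 1 - dl d}. of_bool (\<not> T2 d r))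
   + (\<Sum>r\<in>{n + 1 - dl d..<n}. of_bool (\<not> T2 d r))"
proof -
  have b: "dl d \<le> n" "1 \<le> dl d" using dl_bounds[OF d0 dm] by auto
  have y2: "dl d \<le> thr d" "thr d \<le> n" using y2_ge thr_le by auto
  let ?a = "thr d - dl d" and ?c = "n - dl d"
  have ac: "?a \<le> ?c" using y2 by simp
  have cn: "?c < n" using b by simp
  have sp1: "(\<Sum>r\<in>{0..<n}. U r) = (\<Sum>r\<in>{0..<?a}. U r) + (\<Sum>r\<in>{?a..<n}. U r)"
    using ac cn by (intro sum.atLeastLessThan_concat[symmetric]) auto
  have sp2: "(\<Sum>r\<in>{?a..<n}. U r) = (\<Sum>r\<in>{?a..<?c}. U r) + (\<Sum>r\<in>{?c..<n}. U r)"
    using ac cn by (intro sum.atLeastLessThan_concat[symmetric]) auto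
  have sp3: "(\<Sum>r\<in>{?c..<n}. U r) = U ?c + (\<Sum>r\<in>{Suc ?c..<n}. U r)"
    using cn by (rule sum.atLeast_Suc_lessThan)
  have split: "(\<Sum>r<n. U r) = (\<Sum>r\<in>{0..<?a}. U r) + (\<Sum>r\<in>{?a..<?c}. U r)
      + (\<Sum>r\<in>{?c..<Suc ?c}. U r) + (\<Sum>r\<in>{Suc ?c..<n}. U r)"
    unfolding lessThan_atLeast0 sp1 sp2 sp3 by simp
  have s1: "(\<Sum>r\<in>{0..<?a}. U r) = (\<Sum>r\<in>{0..<?a}. of_bool (\<not> T2 d r))"
    by (rule sum.cong[OF refl]) (use ac in \<open>auto simp: U_def\<close>)
  have s2: "(\<Sum>r\<in>{?a..<?c}. U r) = (\<Sum>r\<in>{?a..<?c}. of_bool (\<not> T d r))"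
    by (rule sum.cong[OF refl]) (auto simp: U_def)
  have s3: "(\<Sum>r\<in>{?c..<Suc ?c}. U r) = 0" by (simp add: U_def)
  have s6: "Suc ?c = n + 1 - dl d" using b by simp
  have s4: "(\<Sum>r\<in>{Suc ?c..<n}. U r) = (\<Sum>r\<in>{n + 1 - dl d..<n}. of_bool (\<not> T2 d r))"
    unfolding s6[symmetric] by (rule sum.cong[OF refl]) (auto simp: U_def)
  have s5: "(\<Sum>r\<in>{0..<thr d + 1 - dl d}. of_bool (\<not> T2 d r)) = (\<Sum>r\<in>{0..<?a}. of_bool (\<not> T2 d r))"
  proof -
    have "thr d + 1 - dl d = Suc ?a" using y2 by simp
    thus ?thesis using T2_y2 by simp
  qed
  show ?thesis unfolding split s1 s2 s3 s4 s5 by simp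
qed

lemma cnt_pair: "cnt d + cnt (m - d) = n - 1"
proof -
  have b: "dl d \<le> n" "1 \<le> dl d" using dl_bounds[OF d0 dm] by auto
  have "cnt d + cnt (m - d) = (\<Sum>r<n. F r + U r)"
    unfolding cnt_F cnt_md sum_U[symmetric] sum.distrib ..
  also have "\<dots> = (\<Sum>r<n. if r = n - dl d then 0 else 1)"
    by (rule sum.cong[OF refl]) (use FU in auto)
  also have "\<dots> = n - 1"
  proof -
    have mem: "n - dl d \<in> {..<n}" using b n0 by simp
    have "(\<Sum>r<n. if r = n - dl d then 0 else 1 :: nat) =
       (if n - dl d = n - dl d then 0 else 1) + (\<Sum>r\<in>{..<n} - {n - dl d}. if r = n - dl d then 0 else 1)"
      by (rule sum.remove[OF _ mem]) simp
    also have "\<dots> = card ({..<n} - {n - dl d})" by simp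
    also have "\<dots> = n - 1" using mem by simp
    finally show ?thesis .
  qed
  finally show ?thesis .
qed

end

lemma cnt_total: "2 * (\<Sum>d\<in>{1..<m}. cnt d) = (m - 1) * (n - 1)"
proof -
  have r: "(\<Sum>d\<in>{1..<m}. cnt (m - d)) = (\<Sum>d\<in>{1..<m}. cnt d)"
    using sum.atLeastLessThan_rev[of "\<lambda>d. cnt (m - d)" 1 m] by simp
  have "2 * (\<Sum>d\<in>{1..<m}. cnt d) = (\<Sum>d\<in>{1..<m}. cnt d + cnt (m - d))"
    unfolding sum.distrib r by simp
  also have "\<dots> = (\<Sum>d\<in>{1..<m}. n - 1)"
    by (rule sum.cong[OF refl]) (simp add: cnt_pair)
  also have "\<dots> = (m - 1) * (n - 1)" by simp
  finally show ?thesis .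
qed

end


lemma seg_lin:
  fixes a b :: "real \<times> real" and \<alpha> \<beta> c :: real
  defines "f \<equiv> \<lambda>q::real\<times>real. \<alpha> * fst q + \<beta> * snd q"
  shows "(\<exists>q\<in>closed_segment a b. f q = c) \<longleftrightarrow> min (f a) (f b) \<le> c \<and> c \<le> max (f a) (f b)"
proof -
  have fu: "f ((1 - u) *\<^sub>R a + u *\<^sub>R b) = (1 - u) * f a + u * f b" for u
    unfolding f_def by (simp add: algebra_simps)
  show ?thesis
  proof
    assume "\<exists>q\<in>closed_segment a b. f q = c"
    then obtain u where u: "0 \<le> u" "u \<le> 1" "f ((1 - u) *\<^sub>R a + u *\<^sub>R b) = c"
      unfolding closed_segment_def by auto
    hence c: "c = (1 - u) * f a + u * f b" using fu by simp
    have "min (f a) (f b) \<le> (1 - u) * f a + u * f b"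
    proof -
      have "(1 - u) * min (f a) (f b) \<le> (1 - u) * f a" using u by (intro mult_left_mono) auto
      moreover have "u * min (f a) (f b) \<le> u * f b" using u by (intro mult_left_mono) auto
      ultimately show ?thesis by (simp add: algebra_simps)
    qed
    moreover have "(1 - u) * f a + u * f b \<le> max (f a) (f b)"
    proof -
      have "(1 - u) * f a \<le> (1 - u) * max (f a) (f b)" using u by (intro mult_left_mono) auto
      moreover have "u * f b \<le> u * max (f a) (f b)" using u by (intro mult_left_mono) auto
      ultimately show ?thesis by (simp add: algebra_simps)
    qed
    ultimately show "min (f a) (f b) \<le> c \<and> c \<le> max (f a) (f b)" using c by simp
  next
    assume h: "min (f a) (f b) \<le> c \<and> c \<le> max (f a) (f b)"
    show "\<exists>q\<in>closed_segment a b. f q = c"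
    proof (cases "f a = f b")
      case True
      hence "f a = c" using h by simp
      thus ?thesis by (intro bexI[of _ a]) auto
    next
      case False
      define u where "u = (c - f a) / (f b - f a)"
      have u01: "0 \<le> u \<and> u \<le> 1"
      proof (cases "f a < f b")
        case True
        thus ?thesis using h unfolding u_def by (auto simp: divide_simps)
      next
        case F: False
        hence "f b < f a" using False by simp
        thus ?thesis using h unfolding u_def by (auto simp: divide_simps)
      qed
      have nz: "f b - f a \<noteq> 0" using False by simp
      have "u * (f b - f a) = c - f a" unfolding u_def using nz by simp
      hence "f ((1 - u) *\<^sub>R a + u *\<^sub>R b) = c" unfolding fu by (simp add: algebra_simps)
      moreover have "(1 - u) *\<^sub>R a + u *\<^sub>R b \<in> closed_segment a b"
        unfolding closed_segment_def using u01 by auto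
      ultimately show ?thesis by blast
    qed
  qed
qed


lemma unit_seg_int:
  fixes u :: real and k :: int
  assumes "0 \<le> u" "u \<le> 1" "real_of_int k = u"
  shows "k = 0 \<or> k = 1"
proof -
  have "0 \<le> k" "k \<le> 1" using assms by linarith+
  thus ?thesis by auto
qed

lemma small_mult: fixes c x :: int assumes "0 < c" "- c \<le> c * x" "c * x \<le> 0"
  shows "x = 0 \<or> x = -1"
proof -
  have "x \<le> 0" using assms by (simp add: mult_le_0_iff)
  moreover have "-1 \<le> x"
  proof (rule ccontr)
    assume "\<not> -1 \<le> x"
    hence "x \<le> -2" by simp
    hence "c * x \<le> c * (-2)" using assms(1) by (intro mult_left_mono) auto
    thus False using assms by simp
  qed
  ultimately show ?thesis by linarith
qed

locale dpath = mnl +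
  fixes P :: "bool list"
  assumes dp: "dyck_path m n P"
begin

abbreviation L where "L \<equiv> length P"
definition xx :: "nat \<Rightarrow> int" where "xx i = fst (vtx P i)"
definition yy :: "nat \<Rightarrow> int" where "yy i = snd (vtx P i)"
definition lv :: "nat \<Rightarrow> int" where "lv i = int n * xx i - int m * yy i"
definition lvp :: "int \<times> int \<Rightarrow> int" where "lvp q = int n * fst q - int m * snd q"

lemma vtx_xy: "vtx P i = (xx i, yy i)" by (simp add: xx_def yy_def)

lemma lvp_vtx: "lvp (vtx P i) = lv i" by (simp add: lvp_def lv_def xx_def yy_def)

lemma Lmn: "L = m + n"
proof -
  have "length (filter Not P) + length (filter id P) = L"
    using sum_length_filter_compl[of id P] by (simp add: comp_def)
  thus ?thesis using dp unfolding dyck_path_def by simp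
qed

lemma vtx_Suc: assumes "i < L"
  shows "vtx P (Suc i) = (if P ! i then (xx i, yy i + 1) else (xx i + 1, yy i))"
  using assms unfolding xx_def yy_def vtx_def by (simp add: take_Suc_conv_app_nth)

lemma xx_Suc: "i < L \<Longrightarrow> xx (Suc i) = (if P ! i then xx i else xx i + 1)"
  using vtx_Suc unfolding xx_def by (metis fst_conv)
lemma yy_Suc: "i < L \<Longrightarrow> yy (Suc i) = (if P ! i then yy i + 1 else yy i)"
  using vtx_Suc unfolding yy_def by (metis snd_conv)
lemma lv_Suc: "i < L \<Longrightarrow> lv (Suc i) = (if P ! i then lv i - int m else lv i + int n)"
  unfolding lv_def using xx_Suc yy_Suc by (simp add: algebra_simps)

lemma vtx0: "vtx P 0 = (0, 0)" unfolding vtx_def by simp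
lemma xx0: "xx 0 = 0" and yy0: "yy 0 = 0" and lv0: "lv 0 = 0"
  using vtx0 by (simp_all add: xx_def yy_def lv_def)

lemma vtxL: "vtx P L = (int m, int n)"
  using dp unfolding vtx_def dyck_path_def by simp
lemma xxL: "xx L = int m" and yyL: "yy L = int n" and lvL: "lv L = 0"
  using vtxL by (simp_all add: xx_def yy_def lv_def)

lemma xy_sum: "i \<le> L \<Longrightarrow> xx i + yy i = int i"
proof (induction i)
  case 0 then show ?case by (simp add: xx0 yy0)
next
  case (Suc i) then show ?case using xx_Suc[of i] yy_Suc[of i] by simp
qed

lemma xx_mono: "i \<le> j \<Longrightarrow> j \<le> L \<Longrightarrow> xx i \<le> xx j"
proof (induction j)
  case 0 then show ?case by simp
next
  case (Suc j) then show ?case using xx_Suc[of j] by (cases "i = Suc j") auto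
qed
lemma yy_mono: "i \<le> j \<Longrightarrow> j \<le> L \<Longrightarrow> yy i \<le> yy j"
proof (induction j)
  case 0 then show ?case by simp
next
  case (Suc j) then show ?case using yy_Suc[of j] by (cases "i = Suc j") auto
qed

lemma xx_ge0: "i \<le> L \<Longrightarrow> 0 \<le> xx i" using xx_mono[of 0 i] xx0 by simp
lemma yy_ge0: "i \<le> L \<Longrightarrow> 0 \<le> yy i" using yy_mono[of 0 i] yy0 by simp
lemma xx_le: "i \<le> L \<Longrightarrow> xx i \<le> int m" using xx_mono[of i L] xxL by simp
lemma yy_le: "i \<le> L \<Longrightarrow> yy i \<le> int n" using yy_mono[of i L] yyL by simp

lemma lv_le0: "i \<le> L \<Longrightarrow> lv i \<le> 0"
  using dp unfolding dyck_path_def lv_def xx_def yy_def by auto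

lemma uniq:
  fixes a b c e :: int
  assumes "int n * a - int m * b = int n * c - int m * e" "\<bar>a - c\<bar> < int m"
  shows "a = c \<and> b = e"
proof -
  have eq: "int n * (a - c) = int m * (b - e)" using assms(1) by (simp add: algebra_simps)
  hence "int m dvd int n * (a - c)" by simp
  moreover have "coprime (int m) (int n)" using cop by simp
  ultimately have "int m dvd (a - c)" by (simp add: coprime_dvd_mult_right_iff)
  then obtain k where k: "a - c = int m * k" by (auto simp: dvd_def)
  hence "\<bar>int m * k\<bar> < int m" using assms(2) by simp
  hence "int m * \<bar>k\<bar> < int m * 1" by (simp add: abs_mult)
  hence "\<bar>k\<bar> < 1" using m0 by (simp only: mult_less_cancel_left)
  hence "a - c = 0" using k by simp
  hence "a = c" by simp
  moreover have "b = e" using eq \<open>a = c\<close> m0 by simp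
  ultimately show ?thesis by simp
qed

lemma xx_lt: assumes "i < L" shows "xx i < int m"
proof (rule ccontr)
  assume "\<not> xx i < int m"
  hence x: "xx i = int m" using xx_le assms by (simp add: less_le)
  have "yy i < int n" using xy_sum[of i] assms Lmn x by simp
  hence "lv i > 0" unfolding lv_def x using m0 by (simp add: algebra_simps mult_strict_left_mono)
  thus False using lv_le0[of i] assms by simp
qed

lemma lv_inj: assumes "i \<le> L" "j \<le> L" "lv i = lv j" "xx i < int m" "xx j < int m"
  shows "i = j"
proof -
  have g: "0 \<le> xx i" "0 \<le> xx j" using xx_ge0 assms(1,2) by auto
  have ab: "\<bar>xx i - xx j\<bar> < int m" using g assms(4,5) by linarith
  have eq: "int n * xx i - int m * yy i = int n * xx j - int m * yy j" using assms(3) unfolding lv_def .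
  have "xx i = xx j \<and> yy i = yy j" by (rule uniq[OF eq ab])
  hence "xx i + yy i = xx j + yy j" by simp
  hence "int i = int j" using xy_sum[OF assms(1)] xy_sum[OF assms(2)] by linarith
  thus ?thesis by simp
qed

lemma lv_neg: assumes "0 < i" "i < L" shows "lv i < 0"
proof -
  have "lv i \<noteq> lv 0"
  proof
    assume e: "lv i = lv 0"
    have "xx i < int m" using xx_lt assms by simp
    moreover have "xx 0 < int m" using xx0 m0 by simp
    ultimately have "i = 0" using lv_inj[of i 0] assms e by simp
    thus False using assms by simp
  qed
  moreover have "lv i \<le> 0" using lv_le0 assms by simp
  ultimately show ?thesis using lv0 by simp
qed

lemma lv_inj': "i < L \<Longrightarrow> j < L \<Longrightarrow> lv i = lv j \<Longrightarrow> i = j"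
  using lv_inj[of i j] xx_lt[of i] xx_lt[of j] by simp

lemma vtx_inj: assumes "i \<le> L" "j \<le> L" "vtx P i = vtx P j" shows "i = j"
proof -
  have "xx i = xx j" "yy i = yy j" using assms(3) unfolding xx_def yy_def by auto
  hence "xx i + yy i = xx j + yy j" by simp
  hence "int i = int j" using xy_sum[of i] xy_sum[of j] assms by linarith
  thus ?thesis by simp
qed

lemma P_first: "P ! 0"
proof (rule ccontr)
  assume "\<not> P ! 0"
  have L1: "0 < L" using Lmn m0 by simp
  hence "lv 1 = int n" using lv_Suc[of 0] \<open>\<not> P ! 0\<close> lv0 by simp
  thus False using lv_le0[of 1] L1 n0 by simp
qed

lemma P_last: "\<not> P ! (L - 1)"
proof
  assume a: "P ! (L - 1)"
  have L1: "0 < L" using Lmn m0 by simp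
  have "lv L = lv (L - 1) - int m" using lv_Suc[of "L - 1"] a L1 by simp
  hence "lv (L - 1) = int m" using lvL by simp
  thus False using lv_le0[of "L - 1"] m0 by simp
qed

lemma rpt_vtx: "rpt (vtx P i) = (real_of_int (xx i), real_of_int (yy i))"
  by (simp add: rpt_def xx_def yy_def)

definition lo :: "nat \<Rightarrow> int" where "lo i = (if P ! i then lv (Suc i) else lv i)"
definition hi :: "nat \<Rightarrow> int" where "hi i = (if P ! i then lv i else lv (Suc i))"

lemma seg_level: assumes "i < L"
  shows "(\<exists>q\<in>step_seg P i. real n * fst q - real m * snd q = c) \<longleftrightarrow>
     real_of_int (lo i) \<le> c \<and> c \<le> real_of_int (hi i)"
proof -
  define f where "f = (\<lambda>q::real\<times>real. real n * fst q + (- real m) * snd q)"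
  have fe: "\<And>q. real n * fst q - real m * snd q = f q" unfolding f_def by simp
  have fa: "f (rpt (vtx P i)) = real_of_int (lv i)" for i
    unfolding f_def rpt_vtx lv_def by simp
  have "(\<exists>q\<in>step_seg P i. f q = c) \<longleftrightarrow>
     min (f (rpt (vtx P i))) (f (rpt (vtx P (Suc i)))) \<le> c \<and> c \<le> max (f (rpt (vtx P i))) (f (rpt (vtx P (Suc i))))"
    unfolding step_seg_def f_def by (rule seg_lin)
  moreover have "min (real_of_int (lv i)) (real_of_int (lv (Suc i))) = real_of_int (lo i)"
    "max (real_of_int (lv i)) (real_of_int (lv (Suc i))) = real_of_int (hi i)"
    using lv_Suc[OF assms] m0 n0 unfolding lo_def hi_def by auto
  ultimately show ?thesis unfolding fe fa by simp
qed

lemma lo_hi: "i < L \<Longrightarrow> lo i \<le> hi i"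
  using lv_Suc[of i] unfolding lo_def hi_def by auto

lemma line_seg: assumes "i < L"
  shows "line_through m n p \<inter> step_seg P i \<noteq> {} \<longleftrightarrow> lo i \<le> lvp p \<and> lvp p \<le> hi i"
proof -
  have "line_through m n p \<inter> step_seg P i \<noteq> {} \<longleftrightarrow>
     (\<exists>q\<in>step_seg P i. real n * fst q - real m * snd q = real_of_int (lvp p))"
    unfolding line_through_def diag_line_def lvp_def rpt_def by auto
  also have "\<dots> \<longleftrightarrow> lo i \<le> lvp p \<and> lvp p \<le> hi i" using seg_level[OF assms] by simp
  finally show ?thesis .
qed

lemma diag_seg: assumes "i < L"
  shows "diag_line m n c \<inter> step_seg P i \<noteq> {} \<longleftrightarrow> real_of_int (lo i) \<le> c \<and> c \<le> real_of_int (hi i)"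
proof -
  have "diag_line m n c \<inter> step_seg P i \<noteq> {} \<longleftrightarrow>
     (\<exists>q\<in>step_seg P i. real n * fst q - real m * snd q = c)"
    unfolding diag_line_def by auto
  thus ?thesis using seg_level[OF assms] by simp
qed

lemma rpt_in_seg: assumes "i < L"
  shows "rpt p \<in> step_seg P i \<longleftrightarrow> p = vtx P i \<or> p = vtx P (Suc i)"
proof
  assume "p = vtx P i \<or> p = vtx P (Suc i)"
  thus "rpt p \<in> step_seg P i" unfolding step_seg_def by auto
next
  assume "rpt p \<in> step_seg P i"
  then obtain u where u: "0 \<le> u" "u \<le> 1"
    "rpt p = (1 - u) *\<^sub>R rpt (vtx P i) + u *\<^sub>R rpt (vtx P (Suc i))"
    unfolding step_seg_def closed_segment_def by auto
  show "p = vtx P i \<or> p = vtx P (Suc i)"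
  proof (cases "P ! i")
    case True
    hence vs: "vtx P (Suc i) = (xx i, yy i + 1)" using vtx_Suc assms by simp
    have e: "real_of_int (fst p) = real_of_int (xx i)" "real_of_int (snd p) = real_of_int (yy i) + u"
      using u(3) unfolding vs rpt_vtx by (auto simp: rpt_def algebra_simps)
    have "real_of_int (snd p - yy i) = u" using e by simp
    hence "snd p - yy i = 0 \<or> snd p - yy i = 1" using unit_seg_int u by blast
    thus ?thesis using e vs vtx_xy[of i] by (cases p) auto
  next
    case False
    hence vs: "vtx P (Suc i) = (xx i + 1, yy i)" using vtx_Suc assms by simp
    have e: "real_of_int (snd p) = real_of_int (yy i)" "real_of_int (fst p) = real_of_int (xx i) + u"
      using u(3) unfolding vs rpt_vtx by (auto simp: rpt_def algebra_simps)
    have "real_of_int (fst p - xx i) = u" using e by simp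
    hence "fst p - xx i = 0 \<or> fst p - xx i = 1" using unit_seg_int u by blast
    thus ?thesis using e vs vtx_xy[of i] by (cases p) auto
  qed
qed

definition hit :: "int \<times> int \<Rightarrow> nat \<Rightarrow> bool" where
  "hit q j \<longleftrightarrow> j < L \<and> P ! j \<and> lv (Suc j) \<le> lvp q \<and> lvp q \<le> lv j \<and> q \<noteq> vtx P j \<and> q \<noteq> vtx P (Suc j)"

lemma kval_eq: "kval m n P q = card {j. hit q j}"
proof -
  have "{i. i < L \<and> P ! i \<and> rpt q \<notin> step_seg P i \<and> line_through m n q \<inter> step_seg P i \<noteq> {}}
      = {j. hit q j}"
  proof (rule set_eqI)
    fix j
    show "j \<in> {i. i < L \<and> P ! i \<and> rpt q \<notin> step_seg P i \<and> line_through m n q \<inter> step_seg P i \<noteq> {}}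
      \<longleftrightarrow> j \<in> {j. hit q j}"
    proof (cases "j < L \<and> P ! j")
      case True
      have a: "rpt q \<in> step_seg P j \<longleftrightarrow> q = vtx P j \<or> q = vtx P (Suc j)" using rpt_in_seg True by simp
      have b: "line_through m n q \<inter> step_seg P j \<noteq> {} \<longleftrightarrow> lv (Suc j) \<le> lvp q \<and> lvp q \<le> lv j"
        using line_seg True unfolding lo_def hi_def by simp
      show ?thesis unfolding hit_def using a b True by auto
    next
      case False thus ?thesis unfolding hit_def by auto
    qed
  qed
  thus ?thesis unfolding kval_def by simp
qed

definition hpairs :: "(nat \<times> nat) set" where
  "hpairs = {(i, j). i < L \<and> j < L \<and> \<not> P ! i \<and> P ! j \<and> i < j \<and> lv j - int m \<le> lv i + int n \<and> lv i \<le> lv j}"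

lemma xx_lt_iff: assumes "i < L" "j < L" "\<not> P ! i" "P ! j"
  shows "xx i < xx j \<longleftrightarrow> i < j"
proof
  assume "i < j"
  hence "xx (Suc i) \<le> xx j" using xx_mono assms by simp
  thus "xx i < xx j" using xx_Suc[of i] assms by simp
next
  assume a: "xx i < xx j"
  show "i < j"
  proof (rule ccontr)
    assume "\<not> i < j"
    hence "j \<le> i" by simp
    hence "xx j \<le> xx i" using xx_mono assms by simp
    thus False using a by simp
  qed
qed

lemma h_plus_eq: "h_plus m n P = card hpairs"
proof -
  have "{(i, j). i < L \<and> j < L \<and> \<not> P ! i \<and> P ! j \<and> fst (vtx P i) < fst (vtx P j) \<and>
      (\<exists>c. diag_line m n c \<inter> step_seg P i \<noteq> {} \<and> diag_line m n c \<inter> step_seg P j \<noteq> {})} = hpairs"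
  proof (rule set_eqI, clarify)
    fix i j
    show "(i, j) \<in> {(i, j). i < L \<and> j < L \<and> \<not> P ! i \<and> P ! j \<and> fst (vtx P i) < fst (vtx P j) \<and>
      (\<exists>c. diag_line m n c \<inter> step_seg P i \<noteq> {} \<and> diag_line m n c \<inter> step_seg P j \<noteq> {})} \<longleftrightarrow>
      (i, j) \<in> hpairs"
    proof (cases "i < L \<and> j < L \<and> \<not> P ! i \<and> P ! j")
      case False thus ?thesis unfolding hpairs_def by auto
    next
      case True
      hence tt: "i < L" "j < L" "\<not> P ! i" "P ! j" by auto
      have lh: "lo i = lv i" "hi i = lv i + int n" "lo j = lv j - int m" "hi j = lv j"
        unfolding lo_def hi_def using tt lv_Suc by auto
      have ex: "(\<exists>c. diag_line m n c \<inter> step_seg P i \<noteq> {} \<and> diag_line m n c \<inter> step_seg P j \<noteq> {})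
         \<longleftrightarrow> (lv j - int m \<le> lv i + int n \<and> lv i \<le> lv j)"
      proof
        assume "\<exists>c. diag_line m n c \<inter> step_seg P i \<noteq> {} \<and> diag_line m n c \<inter> step_seg P j \<noteq> {}"
        then obtain c where "real_of_int (lo i) \<le> c \<and> c \<le> real_of_int (hi i)"
          "real_of_int (lo j) \<le> c \<and> c \<le> real_of_int (hi j)" using diag_seg tt by blast
        hence "real_of_int (lv j - int m) \<le> real_of_int (lv i + int n)" "real_of_int (lv i) \<le> real_of_int (lv j)"
          unfolding lh by linarith+
        thus "lv j - int m \<le> lv i + int n \<and> lv i \<le> lv j" by linarith
      next
        assume a: "lv j - int m \<le> lv i + int n \<and> lv i \<le> lv j"
        define c where "c = real_of_int (max (lv i) (lv j - int m))"
        have "real_of_int (lo i) \<le> c \<and> c \<le> real_of_int (hi i)"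
          "real_of_int (lo j) \<le> c \<and> c \<le> real_of_int (hi j)" unfolding lh c_def using a n0 m0 by auto
        thus "\<exists>c. diag_line m n c \<inter> step_seg P i \<noteq> {} \<and> diag_line m n c \<inter> step_seg P j \<noteq> {}"
          using diag_seg tt by blast
      qed
      have "fst (vtx P i) < fst (vtx P j) \<longleftrightarrow> i < j" using xx_lt_iff[OF tt] unfolding xx_def .
      thus ?thesis using ex tt unfolding hpairs_def by auto
    qed
  qed
  thus ?thesis unfolding h_plus_def by simp
qed

definition Hs :: "nat \<Rightarrow> (int \<times> int) set" where
  "Hs j = {q. hit q j \<and> 0 \<le> fst q \<and> fst q < int m}"

definition Qf :: "nat \<Rightarrow> nat \<Rightarrow> int \<times> int" where
  "Qf j d = (if xx j + int d < int m then (xx j + int d, yy j + int (dl d))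
     else (xx j + int d - int m, yy j + int (dl d) - int n))"

lemma lvp_Qf: "lvp (Qf j d) = lv j + int n * int d - int m * int (dl d)"
  unfolding Qf_def lvp_def lv_def by (simp add: algebra_simps)

lemma Qf_in: assumes j: "j < L" "P ! j" and d: "0 < d" "d < m" shows "Qf j d \<in> Hs j"
proof -
  have b1: "int m * (int (dl d) - 1) < int n * int d" using dl_bounds_int d by simp
  have b2: "int n * int d < int m * int (dl d)" using dl_bounds_int d by simp
  have lj: "lv (Suc j) = lv j - int m" using lv_Suc j by simp
  have l1: "lv (Suc j) < lvp (Qf j d)" unfolding lvp_Qf lj using b1 by (simp add: algebra_simps)
  have l2: "lvp (Qf j d) < lv j" unfolding lvp_Qf using b2 by simp
  have n1: "Qf j d \<noteq> vtx P j" using l2 lvp_vtx by auto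
  have n2: "Qf j d \<noteq> vtx P (Suc j)" using l1 lvp_vtx by auto
  have x: "0 \<le> xx j" "xx j < int m" using xx_ge0 xx_lt j by auto
  have f: "0 \<le> fst (Qf j d) \<and> fst (Qf j d) < int m" unfolding Qf_def using x d by auto
  show ?thesis unfolding Hs_def hit_def using j l1 l2 n1 n2 f by auto
qed

lemma Qf_inj: "inj_on (Qf j) {1..<m}"
proof (rule inj_onI)
  fix d1 d2 assume a: "d1 \<in> {1..<m}" "d2 \<in> {1..<m}" "Qf j d1 = Qf j d2"
  hence "fst (Qf j d1) = fst (Qf j d2)" by simp
  hence "int d1 = int d2" using a(1,2) unfolding Qf_def by (auto split: if_splits)
  thus "d1 = d2" by simp
qed

lemma Qf_surj: assumes q: "q \<in> Hs j" shows "\<exists>d\<in>{1..<m}. q = Qf j d"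
proof -
  obtain a b where qab: "q = (a, b)" by (cases q)
  have h: "j < L" "P ! j" "lv (Suc j) \<le> lvp q" "lvp q \<le> lv j" "q \<noteq> vtx P j" "q \<noteq> vtx P (Suc j)"
    "0 \<le> a" "a < int m" using q unfolding Hs_def hit_def qab by auto
  have lj: "lv (Suc j) = lv j - int m" using lv_Suc h by simp
  have x: "0 \<le> xx j" "xx j < int m" using xx_ge0 xx_lt h by auto
  have vs: "vtx P (Suc j) = (xx j, yy j + 1)" using vtx_Suc h by simp
  have lq: "lvp q = int n * a - int m * b" unfolding qab lvp_def by simp
  have lvj: "lv j = int n * xx j - int m * yy j" unfolding lv_def ..
  consider "a = xx j" | "xx j < a" | "a < xx j" by linarith
  thus ?thesis
  proof cases
    case 1
    have "- int m \<le> int m * (yy j - b)" "int m * (yy j - b) \<le> 0"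
      using h(3,4) unfolding lj lq lvj 1 by (simp_all add: algebra_simps)
    hence "yy j - b = 0 \<or> yy j - b = -1" using small_mult[of "int m" "yy j - b"] m0 by linarith
    hence "b = yy j \<or> b = yy j + 1" by linarith
    thus ?thesis using h(5,6) vs 1 vtx_xy[of j] qab by auto
  next
    case 2
    define d where "d = nat (a - xx j)"
    have dd: "int d = a - xx j" "0 < d" "d < m" using 2 h x unfolding d_def by auto
    have "- int m \<le> int n * int d - int m * (b - yy j)" "int n * int d - int m * (b - yy j) \<le> 0"
      using h(3,4) unfolding lj lq lvj dd(1) by (simp_all add: algebra_simps)
    hence e: "b - yy j = int (dl d)" using dl_unique dd by blast
    have "xx j + int d < int m" using dd h by simp
    hence "Qf j d = (a, b)" unfolding Qf_def using dd e by simp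
    moreover have "d \<in> {1..<m}" using dd by simp
    ultimately show ?thesis using qab by metis
  next
    case 3
    define d where "d = nat (a - xx j + int m)"
    have dd: "int d = a - xx j + int m" "0 < d" "d < m" using 3 h x unfolding d_def by auto
    have "- int m \<le> int n * int d - int m * (b + int n - yy j)" "int n * int d - int m * (b + int n - yy j) \<le> 0"
      using h(3,4) unfolding lj lq lvj dd(1) by (simp_all add: algebra_simps)
    hence e: "b + int n - yy j = int (dl d)" using dl_unique dd by blast
    have "\<not> xx j + int d < int m" using dd h by simp
    hence "Qf j d = (a, b)" unfolding Qf_def using dd e by simp
    moreover have "d \<in> {1..<m}" using dd by simp
    ultimately show ?thesis using qab by metis
  qed
qed

lemma Qf_bij: assumes "j < L" "P ! j" shows "bij_betw (Qf j) {1..<m} (Hs j)"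
  unfolding bij_betw_def using Qf_inj Qf_in Qf_surj assms by fastforce

lemma Hs_empty: "\<not> (j < L \<and> P ! j) \<Longrightarrow> Hs j = {}"
  unfolding Hs_def hit_def by auto

lemma Hs_finite: "finite (Hs j)"
proof (cases "j < L \<and> P ! j")
  case True
  hence "Hs j = Qf j ` {1..<m}" using Qf_bij[of j] unfolding bij_betw_def by auto
  thus ?thesis by simp
next
  case False thus ?thesis using Hs_empty by simp
qed

definition OutI :: "nat \<Rightarrow> bool" where "OutI k \<longleftrightarrow> 0 < k \<and> k < L \<and> P ! (k - 1) \<and> \<not> P ! k"
definition IntI :: "nat \<Rightarrow> bool" where "IntI k \<longleftrightarrow> 0 < k \<and> k < L \<and> \<not> P ! (k - 1) \<and> P ! k"

lemma outer_img: "outer_vertices P = vtx P ` {k. OutI k}"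
proof (rule set_eqI)
  fix v
  show "v \<in> outer_vertices P \<longleftrightarrow> v \<in> vtx P ` {k. OutI k}"
  proof
    assume "v \<in> outer_vertices P"
    then obtain i where "v = vtx P (Suc i)" "Suc i < L" "P ! i" "\<not> P ! Suc i"
      unfolding outer_vertices_def by auto
    thus "v \<in> vtx P ` {k. OutI k}" unfolding OutI_def by (intro image_eqI[of _ _ "Suc i"]) auto
  next
    assume "v \<in> vtx P ` {k. OutI k}"
    then obtain k where "v = vtx P k" "OutI k" by auto
    thus "v \<in> outer_vertices P" unfolding OutI_def outer_vertices_def
      by (intro CollectI exI[of _ "k - 1"]) auto
  qed
qed

lemma internal_img: "internal_vertices P = vtx P ` {k. IntI k}"
proof (rule set_eqI)
  fix v
  show "v \<in> internal_vertices P \<longleftrightarrow> v \<in> vtx P ` {k. IntI k}"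
  proof
    assume "v \<in> internal_vertices P"
    then obtain i where "v = vtx P (Suc i)" "Suc i < L" "\<not> P ! i" "P ! Suc i"
      unfolding internal_vertices_def by auto
    thus "v \<in> vtx P ` {k. IntI k}" unfolding IntI_def by (intro image_eqI[of _ _ "Suc i"]) auto
  next
    assume "v \<in> vtx P ` {k. IntI k}"
    then obtain k where "v = vtx P k" "IntI k" by auto
    thus "v \<in> internal_vertices P" unfolding IntI_def internal_vertices_def
      by (intro CollectI exI[of _ "k - 1"]) auto
  qed
qed

abbreviation Inner where "Inner \<equiv> inner_points m n P"

lemma dIVT: fixes f :: "nat \<Rightarrow> int"
  assumes "f 0 \<le> c" "c \<le> f N" "\<And>i. i < N \<Longrightarrow> f (Suc i) \<le> f i + 1"
  shows "\<exists>i\<le>N. f i = c"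
  using assms
proof (induction N)
  case 0 thus ?case by (intro exI[of _ 0]) simp
next
  case (Suc N)
  show ?case
  proof (cases "c \<le> f N")
    case True thus ?thesis using Suc by (meson le_SucI less_SucI)
  next
    case False
    hence "c = f (Suc N)" using Suc.prems(2) Suc.prems(3)[of N] by simp
    thus ?thesis by (intro exI[of _ "Suc N"]) simp
  qed
qed

lemma col_exists: assumes "0 \<le> a" "a \<le> int m" shows "\<exists>j\<le>L. xx j = a"
  using dIVT[of xx a L] assms xx0 xxL xx_Suc by force

lemma row_exists: assumes "0 \<le> b" "b \<le> int n" shows "\<exists>j\<le>L. yy j = b"
  using dIVT[of yy b L] assms yy0 yyL yy_Suc by force

lemma inner_props: assumes "q \<in> Inner"
  shows "0 < fst q" "fst q < int m" "lvp q < 0" "\<And>k. k \<le> L \<Longrightarrow> q \<noteq> vtx P k"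
proof -
  obtain a b where q: "q = (a, b)" by (cases q)
  have h: "0 \<le> a" "a \<le> int m" "int n * a < int m * b" "\<And>j. j \<le> L \<Longrightarrow> xx j = a \<Longrightarrow> b < yy j"
    using assms unfolding q inner_points_def xx_def yy_def by auto
  show "lvp q < 0" unfolding q lvp_def using h by simp
  show "0 < fst q"
  proof (rule ccontr)
    assume "\<not> 0 < fst q"
    hence "a = 0" using h q by simp
    hence "b < 0" using h(4)[of 0] xx0 yy0 by simp
    hence "int m * b < 0" using m0 by (simp add: mult_pos_neg)
    thus False using h(3) \<open>a = 0\<close> by simp
  qed
  show "fst q < int m"
  proof (rule ccontr)
    assume "\<not> fst q < int m"
    hence "a = int m" using h q by simp
    hence "b < int n" using h(4)[of L] xxL yyL by simp
    hence "int m * b < int m * int n" using m0 by simp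
    thus False using h(3) \<open>a = int m\<close> by (simp add: mult.commute)
  qed
  show "\<And>k. k \<le> L \<Longrightarrow> q \<noteq> vtx P k"
  proof
    fix k assume k: "k \<le> L" "q = vtx P k"
    hence "a = xx k" "b = yy k" unfolding q xx_def yy_def by (metis fst_conv, metis snd_conv)
    thus False using h(4)[OF k(1)] by simp
  qed
qed

lemma inner_finite: "finite Inner"
proof -
  have "Inner \<subseteq> {0..int m} \<times> {- 1..int n}"
  proof
    fix q assume a: "q \<in> Inner"
    obtain a b where q: "q = (a, b)" by (cases q)
    have h: "0 \<le> a" "a \<le> int m" "int n * a < int m * b" "\<And>j. j \<le> L \<Longrightarrow> xx j = a \<Longrightarrow> b < yy j"
      using a unfolding q inner_points_def xx_def yy_def by auto
    have "0 < int m * b" using h(1,3) n0 by (smt (verit) mult_nonneg_nonneg of_nat_0_le_iff)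
    hence "0 < b" using m0 by (simp add: zero_less_mult_iff)
    moreover have "b \<le> int n"
    proof -
      obtain j where j: "j \<le> L" "xx j = a" using col_exists h(1,2) by blast
      thus ?thesis using h(4)[OF j] yy_le[OF j(1)] by simp
    qed
    ultimately show "q \<in> {0..int m} \<times> {- 1..int n}" using h q by auto
  qed
  thus ?thesis by (rule finite_subset) simp
qed

lemma sum_of_bool_card: "finite A \<Longrightarrow> (\<Sum>x\<in>A. of_bool (Q x) :: nat) = card {x\<in>A. Q x}"
proof -
  assume f: "finite A"
  have "card {x\<in>A. Q x} = (\<Sum>x\<in>{x\<in>A. Q x}. 1)" by simp
  also have "\<dots> = (\<Sum>x\<in>A. if Q x then 1 else 0)" using f by (rule sum.inter_filter)
  finally show ?thesis by (simp add: of_bool_def)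
qed

lemma kval_sum: "kval m n P q = (\<Sum>j<L. of_bool (hit q j))"
proof -
  have "{j. hit q j} = {j\<in>{..<L}. hit q j}" unfolding hit_def by auto
  thus ?thesis unfolding kval_eq using sum_of_bool_card[of "{..<L}" "hit q"] by simp
qed

lemma sum_kval_pts: assumes "finite A" "\<And>q. q \<in> A \<Longrightarrow> 0 \<le> fst q \<and> fst q < int m"
  shows "(\<Sum>q\<in>A. kval m n P q) = (\<Sum>j<L. card {q\<in>Hs j. q \<in> A})"
proof -
  have "(\<Sum>q\<in>A. kval m n P q) = (\<Sum>q\<in>A. \<Sum>j<L. of_bool (hit q j))" unfolding kval_sum ..
  also have "\<dots> = (\<Sum>j<L. \<Sum>q\<in>A. of_bool (hit q j))" by (rule sum.swap)
  also have "\<dots> = (\<Sum>j<L. card {q\<in>Hs j. q \<in> A})"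
  proof (rule sum.cong[OF refl])
    fix j
    have "{q\<in>Hs j. q \<in> A} = {q\<in>A. hit q j}" unfolding Hs_def using assms(2) by auto
    thus "(\<Sum>q\<in>A. of_bool (hit q j)) = card {q\<in>Hs j. q \<in> A}"
      using assms(1) sum_of_bool_card[of A "\<lambda>q. hit q j"] by simp
  qed
  finally show ?thesis .
qed

lemma sum_kval_vtx: assumes "K \<subseteq> {..L}"
  shows "(\<Sum>q\<in>vtx P ` K. kval m n P q) = (\<Sum>k\<in>K. \<Sum>j<L. of_bool (hit (vtx P k) j))"
proof -
  have "inj_on (vtx P) K" using vtx_inj assms by (intro inj_onI) auto
  thus ?thesis by (simp add: sum.reindex kval_sum)
qed

lemma Hs_col: assumes "q \<in> Hs j" shows "fst q \<noteq> xx j"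
proof -
  have jj: "j < L" "P ! j" using assms unfolding Hs_def hit_def by auto
  obtain d where d: "d \<in> {1..<m}" "q = Qf j d" using Qf_surj assms by blast
  show ?thesis using d unfolding Qf_def by (auto split: if_splits)
qed

definition goodR :: "int \<times> int \<Rightarrow> bool" where
  "goodR q \<longleftrightarrow> q \<in> Inner \<or> (\<exists>k. 0 < k \<and> k < L \<and> P ! k \<and> q = vtx P k)"
definition goodL :: "int \<times> int \<Rightarrow> bool" where
  "goodL q \<longleftrightarrow> q \<in> Inner \<or> (\<exists>k. 0 < k \<and> k < L \<and> \<not> P ! (k - 1) \<and> q = vtx P k)"
definition good :: "nat \<Rightarrow> int \<times> int \<Rightarrow> bool" where
  "good j q \<longleftrightarrow> (xx j < fst q \<and> goodR q) \<or> (fst q < xx j \<and> goodL q)"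

definition vgood :: "nat \<Rightarrow> nat \<Rightarrow> bool" where
  "vgood j k \<longleftrightarrow> (xx j < xx k \<and> P ! k) \<or> (xx k < xx j \<and> \<not> P ! (k - 1))"

lemma vtx_hit_Hs: assumes "0 < k" "k < L" shows "vtx P k \<in> Hs j \<longleftrightarrow> hit (vtx P k) j"
  using xx_ge0[of k] xx_lt[of k] assms unfolding Hs_def xx_def by auto

lemma good_split: assumes j: "j < L"
  shows "card {q\<in>Hs j. good j q} = card {q\<in>Hs j. q \<in> Inner} +
     card {k\<in>{0<..<L}. hit (vtx P k) j \<and> vgood j k}"
proof -
  have e: "{q\<in>Hs j. good j q} = {q\<in>Hs j. q \<in> Inner} \<union> vtx P ` {k\<in>{0<..<L}. hit (vtx P k) j \<and> vgood j k}"
  proof (rule set_eqI)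
    fix q
    show "q \<in> {q\<in>Hs j. good j q} \<longleftrightarrow> q \<in> {q\<in>Hs j. q \<in> Inner} \<union> vtx P ` {k\<in>{0<..<L}. hit (vtx P k) j \<and> vgood j k}"
    proof
      assume a: "q \<in> {q\<in>Hs j. good j q}"
      hence qh: "q \<in> Hs j" "good j q" by auto
      show "q \<in> {q\<in>Hs j. q \<in> Inner} \<union> vtx P ` {k\<in>{0<..<L}. hit (vtx P k) j \<and> vgood j k}"
      proof (cases "q \<in> Inner")
        case True thus ?thesis using qh by auto
      next
        case False
        then obtain k where k: "0 < k" "k < L" "q = vtx P k"
          "(xx j < xx k \<and> P ! k) \<or> (xx k < xx j \<and> \<not> P ! (k - 1))"
          using qh(2) unfolding good_def goodR_def goodL_def xx_def by auto
        have "hit (vtx P k) j" using qh(1) k unfolding Hs_def by auto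
        thus ?thesis using k unfolding vgood_def by auto
      qed
    next
      assume "q \<in> {q\<in>Hs j. q \<in> Inner} \<union> vtx P ` {k\<in>{0<..<L}. hit (vtx P k) j \<and> vgood j k}"
      thus "q \<in> {q\<in>Hs j. good j q}"
      proof
        assume a: "q \<in> {q\<in>Hs j. q \<in> Inner}"
        hence "fst q \<noteq> xx j" using Hs_col by auto
        thus ?thesis using a unfolding good_def goodR_def goodL_def by auto
      next
        assume "q \<in> vtx P ` {k\<in>{0<..<L}. hit (vtx P k) j \<and> vgood j k}"
        then obtain k where k: "0 < k" "k < L" "hit (vtx P k) j" "vgood j k" "q = vtx P k" by auto
        have "q \<in> Hs j" using vtx_hit_Hs k by simp
        moreover have "good j q" using k unfolding good_def goodR_def goodL_def vgood_def xx_def by auto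
        ultimately show ?thesis by simp
      qed
    qed
  qed
  have disj: "{q\<in>Hs j. q \<in> Inner} \<inter> vtx P ` {k\<in>{0<..<L}. hit (vtx P k) j \<and> vgood j k} = {}"
  proof (rule equals0I)
    fix q assume "q \<in> {q\<in>Hs j. q \<in> Inner} \<inter> vtx P ` {k\<in>{0<..<L}. hit (vtx P k) j \<and> vgood j k}"
    then obtain k where "q \<in> Inner" "k < L" "q = vtx P k" by auto
    thus False using inner_props(4)[of q k] by simp
  qed
  have inj: "inj_on (vtx P) {k\<in>{0<..<L}. hit (vtx P k) j \<and> vgood j k}"
    using vtx_inj by (intro inj_onI) auto
  have f1: "finite {q\<in>Hs j. q \<in> Inner}" using Hs_finite by simp
  have f2: "finite (vtx P ` {k\<in>{0<..<L}. hit (vtx P k) j \<and> vgood j k})" by simp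
  show ?thesis unfolding e card_Un_disjoint[OF f1 f2 disj] card_image[OF inj] ..
qed

lemma vgood_pt: assumes "0 < k" "k < L" "hit (vtx P k) j"
  shows "int (of_bool (vgood j k)) = of_bool (IntI k) + of_bool (xx k < xx j \<and> \<not> P ! k)
     + of_bool (xx j < xx k \<and> P ! (k - 1)) - of_bool (OutI k)"
proof -
  have "vtx P k \<in> Hs j" using vtx_hit_Hs assms by simp
  hence ne: "xx k \<noteq> xx j" using Hs_col unfolding xx_def by auto
  show ?thesis unfolding vgood_def IntI_def OutI_def using assms ne
    by (cases "P ! k"; cases "P ! (k - 1)"; cases "xx k < xx j") auto
qed

lemma telescope: assumes "q \<le> L"
  shows "(\<Sum>i<q. int (of_bool (P ! i \<and> lv (Suc i) \<le> t \<and> t < lv i)) - int (of_bool (\<not> P ! i \<and> lv i \<le> t \<and> t < lv (Suc i))))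
    = int (of_bool (t < lv 0)) - int (of_bool (t < lv q))"
  using assms
proof (induction q)
  case 0 thus ?case by simp
next
  case (Suc q)
  have q: "q < L" using Suc by simp
  show ?case
  proof (cases "P ! q")
    case True
    hence "lv (Suc q) = lv q - int m" using lv_Suc q by simp
    thus ?thesis using Suc True m0 by auto
  next
    case False
    hence "lv (Suc q) = lv q + int n" using lv_Suc q by simp
    thus ?thesis using Suc False n0 by auto
  qed
qed

lemma alternation: assumes k: "0 < k" "k < L" "P ! (k - 1)"
  shows "card {i. i < L \<and> \<not> P ! i \<and> i < k - 1 \<and> lv i < lv k \<and> lv k \<le> lv (Suc i)}
       = card {j. j < L \<and> hit (vtx P k) j \<and> xx j < xx k}"
proof -
  define p0 where "p0 = (LEAST p. xx p = xx k)"
  define t where "t = lv k"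
  have km1: "xx (k - 1) = xx k" using xx_Suc[of "k - 1"] k by simp
  have F1: "p0 \<le> k - 1" unfolding p0_def using km1 by (rule Least_le)
  have F2: "xx p0 = xx k" unfolding p0_def by (rule LeastI) simp
  have F3: "\<And>i. i < p0 \<Longrightarrow> xx i < xx k"
  proof -
    fix i assume i: "i < p0"
    have "xx i \<noteq> xx k" using not_less_Least[of i "\<lambda>p. xx p = xx k"] i unfolding p0_def by blast
    moreover have "xx i \<le> xx p0" using xx_mono i F1 k by simp
    ultimately show "xx i < xx k" using F2 by simp
  qed
  have F4: "\<And>i. p0 \<le> i \<Longrightarrow> i \<le> k \<Longrightarrow> xx i = xx k"
  proof -
    fix i assume "p0 \<le> i" "i \<le> k"
    hence "xx p0 \<le> xx i" "xx i \<le> xx k" using xx_mono k by auto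
    thus "xx i = xx k" using F2 by simp
  qed
  have F5: "\<And>i. p0 \<le> i \<Longrightarrow> i < k \<Longrightarrow> P ! i"
  proof -
    fix i assume "p0 \<le> i" "i < k"
    hence "xx (Suc i) = xx i" using F4[of i] F4[of "Suc i"] by simp
    thus "P ! i" using xx_Suc[of i] \<open>i < k\<close> k by (auto split: if_splits)
  qed
  have F6: "t < lv p0"
  proof -
    have pl: "p0 \<le> L" using F1 k by simp
    have "yy k - yy p0 = int k - int p0" using xy_sum[of k] xy_sum[OF pl] F2 k by linarith
    hence "yy p0 < yy k" using F1 k by simp
    thus ?thesis unfolding t_def lv_def F2[symmetric] using m0 by simp
  qed
  have F7: "t < 0" unfolding t_def using lv_neg k by simp
  have F8: "\<And>i. i \<le> p0 \<Longrightarrow> lv i \<noteq> t"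
  proof
    fix i assume "i \<le> p0" "lv i = t"
    have e: "lv i = lv k" using \<open>lv i = t\<close> unfolding t_def .
    have "i < L" "k < L" using \<open>i \<le> p0\<close> F1 k by auto
    hence "i = k" using lv_inj' e by blast
    thus False using \<open>i \<le> p0\<close> F1 k by simp
  qed
  define Vc where "Vc j \<longleftrightarrow> P ! j \<and> lv (Suc j) \<le> t \<and> t < lv j" for j
  define Hc where "Hc i \<longleftrightarrow> \<not> P ! i \<and> lv i \<le> t \<and> t < lv (Suc i)" for i
  have pL: "p0 \<le> L" using F1 k by simp
  have tp: "(\<Sum>i<p0. int (of_bool (P ! i \<and> lv (Suc i) \<le> t \<and> t < lv i)) - int (of_bool (\<not> P ! i \<and> lv i \<le> t \<and> t < lv (Suc i))))
    = int (of_bool (t < lv 0)) - int (of_bool (t < lv p0))" by (rule telescope[OF pL])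
  have v: "int (of_bool (t < lv 0)) - int (of_bool (t < lv p0)) = 0" using F6 F7 lv0 by simp
  have tel: "(\<Sum>i<p0. int (of_bool (Vc i)) - int (of_bool (Hc i))) = 0"
    unfolding Vc_def Hc_def using trans[OF tp v] .
  hence "(\<Sum>i<p0. int (of_bool (Vc i))) = (\<Sum>i<p0. int (of_bool (Hc i)))"
    by (simp add: sum_subtractf)
  hence "int (\<Sum>i<p0. of_bool (Vc i) :: nat) = int (\<Sum>i<p0. of_bool (Hc i))"
    by (simp add: of_nat_sum)
  hence "(\<Sum>i<p0. of_bool (Vc i) :: nat) = (\<Sum>i<p0. of_bool (Hc i))" by (simp only: of_nat_eq_iff)
  hence cc: "card {i\<in>{..<p0}. Vc i} = card {i\<in>{..<p0}. Hc i}"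
    using sum_of_bool_card[of "{..<p0}" Vc] sum_of_bool_card[of "{..<p0}" Hc] by simp
  have L1: "{i. i < L \<and> \<not> P ! i \<and> i < k - 1 \<and> lv i < lv k \<and> lv k \<le> lv (Suc i)} = {i\<in>{..<p0}. Hc i}"
  proof (rule set_eqI)
    fix i
    show "i \<in> {i. i < L \<and> \<not> P ! i \<and> i < k - 1 \<and> lv i < lv k \<and> lv k \<le> lv (Suc i)} \<longleftrightarrow> i \<in> {i\<in>{..<p0}. Hc i}"
    proof
      assume a: "i \<in> {i. i < L \<and> \<not> P ! i \<and> i < k - 1 \<and> lv i < lv k \<and> lv k \<le> lv (Suc i)}"
      have ik: "i < k" using a by auto
      have ip: "i < p0"
      proof (rule ccontr)
        assume "\<not> i < p0"
        hence "P ! i" using F5[of i] ik by simp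
        thus False using a by simp
      qed
      have "lv (Suc i) \<noteq> t" using F8[of "Suc i"] ip by simp
      thus "i \<in> {i\<in>{..<p0}. Hc i}" using a ip unfolding Hc_def t_def by auto
    next
      assume a: "i \<in> {i\<in>{..<p0}. Hc i}"
      have "lv i \<noteq> t" using F8[of i] a by simp
      thus "i \<in> {i. i < L \<and> \<not> P ! i \<and> i < k - 1 \<and> lv i < lv k \<and> lv k \<le> lv (Suc i)}"
        using a F1 k unfolding Hc_def t_def by auto
    qed
  qed
  have L2: "{j. j < L \<and> hit (vtx P k) j \<and> xx j < xx k} = {i\<in>{..<p0}. Vc i}"
  proof (rule set_eqI)
    fix j
    show "j \<in> {j. j < L \<and> hit (vtx P k) j \<and> xx j < xx k} \<longleftrightarrow> j \<in> {i\<in>{..<p0}. Vc i}"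
    proof
      assume a: "j \<in> {j. j < L \<and> hit (vtx P k) j \<and> xx j < xx k}"
      have jp: "j < p0"
      proof (rule ccontr)
        assume "\<not> j < p0"
        hence "xx p0 \<le> xx j" using xx_mono a by simp
        thus False using a F2 by simp
      qed
      have "lv j \<noteq> t" using F8[of j] jp by simp
      thus "j \<in> {i\<in>{..<p0}. Vc i}" using a jp unfolding Vc_def hit_def t_def lvp_vtx by auto
    next
      assume a: "j \<in> {i\<in>{..<p0}. Vc i}"
      have jp: "j < p0" using a by simp
      have "vtx P k \<noteq> vtx P j"
      proof
        assume "vtx P k = vtx P j"
        hence "k = j" using vtx_inj[of k j] jp F1 k by simp
        thus False using jp F1 k by simp
      qed
      moreover have "vtx P k \<noteq> vtx P (Suc j)"
      proof
        assume "vtx P k = vtx P (Suc j)"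
        hence "k = Suc j" using vtx_inj[of k "Suc j"] jp F1 k by simp
        thus False using jp F1 k by simp
      qed
      moreover have "xx j < xx k" using F3 jp by simp
      ultimately show "j \<in> {j. j < L \<and> hit (vtx P k) j \<and> xx j < xx k}"
        using a jp F1 k unfolding Vc_def hit_def t_def lvp_vtx by auto
    qed
  qed
  show ?thesis unfolding L1 L2 using cc by simp
qed

lemma card_pairs: assumes "finite K" "finite J"
  shows "card {(k, j). k \<in> K \<and> j \<in> J \<and> R k j} = (\<Sum>j\<in>J. card {k\<in>K. R k j})"
proof -
  have e: "{(k, j). k \<in> K \<and> j \<in> J \<and> R k j} = (\<lambda>(j, k). (k, j)) ` (SIGMA j:J. {k\<in>K. R k j})"
    by auto
  have i: "inj_on (\<lambda>(j, k). (k, j)) (SIGMA j:J. {k\<in>K. R k j})" by (auto simp: inj_on_def)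
  show ?thesis unfolding e card_image[OF i] using assms by (simp add: card_SigmaI)
qed

lemma hp_count: "card hpairs = (\<Sum>j<L. card {k\<in>{0<..<L}. hit (vtx P k) j \<and> xx k < xx j \<and> \<not> P ! k})
   + (\<Sum>k\<in>{0<..<L}. of_bool (P ! (k - 1)) * card {j. j < L \<and> hit (vtx P k) j \<and> xx j < xx k})"
proof -
  define hp1 where "hp1 = {(i, j). (i, j) \<in> hpairs \<and> lv j - int m \<le> lv i}"
  define hp2 where "hp2 = {(i, j). (i, j) \<in> hpairs \<and> lv i < lv j - int m}"
  have sub: "hpairs \<subseteq> {..<L} \<times> {..<L}" unfolding hpairs_def by auto
  have fin: "finite hp1" "finite hp2" using finite_subset[OF sub] unfolding hp1_def hp2_def
    by (auto intro: finite_subset)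
  have un: "hpairs = hp1 \<union> hp2" unfolding hp1_def hp2_def by auto
  have dis: "hp1 \<inter> hp2 = {}" unfolding hp1_def hp2_def by auto
  have c: "card hpairs = card hp1 + card hp2" unfolding un using card_Un_disjoint[OF fin dis] .
  have e1: "hp1 = {(k, j). k \<in> {0<..<L} \<and> j \<in> {..<L} \<and> (hit (vtx P k) j \<and> xx k < xx j \<and> \<not> P ! k)}"
  proof (rule set_eqI, clarify)
    fix i j
    show "(i, j) \<in> hp1 \<longleftrightarrow> (i, j) \<in> {(k, j). k \<in> {0<..<L} \<and> j \<in> {..<L} \<and> (hit (vtx P k) j \<and> xx k < xx j \<and> \<not> P ! k)}"
    proof
      assume a: "(i, j) \<in> hp1"
      hence h: "i < L" "j < L" "\<not> P ! i" "P ! j" "i < j" "lv j - int m \<le> lv i" "lv i \<le> lv j"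
        unfolding hp1_def hpairs_def by auto
      have i0: "0 < i" using h(3) P_first by (cases i) auto
      have lj: "lv (Suc j) = lv j - int m" using lv_Suc h by simp
      have n1: "vtx P i \<noteq> vtx P j" using vtx_inj[of i j] h by auto
      have n2: "vtx P i \<noteq> vtx P (Suc j)" using vtx_inj[of i "Suc j"] h by auto
      have "hit (vtx P i) j" unfolding hit_def lvp_vtx lj using h n1 n2 by simp
      moreover have "xx i < xx j" using xx_lt_iff[of i j] h by simp
      ultimately show "(i, j) \<in> {(k, j). k \<in> {0<..<L} \<and> j \<in> {..<L} \<and> (hit (vtx P k) j \<and> xx k < xx j \<and> \<not> P ! k)}"
        using h i0 by simp
    next
      assume "(i, j) \<in> {(k, j). k \<in> {0<..<L} \<and> j \<in> {..<L} \<and> (hit (vtx P k) j \<and> xx k < xx j \<and> \<not> P ! k)}"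
      hence h: "0 < i" "i < L" "j < L" "hit (vtx P i) j" "xx i < xx j" "\<not> P ! i" by auto
      have h2: "P ! j" "lv (Suc j) \<le> lv i" "lv i \<le> lv j" using h(4) unfolding hit_def lvp_vtx by auto
      have lj: "lv (Suc j) = lv j - int m" using lv_Suc h h2 by simp
      have "i < j" using xx_lt_iff[of i j] h h2 by simp
      thus "(i, j) \<in> hp1" unfolding hp1_def hpairs_def using h h2 lj n0 by auto
    qed
  qed
  have c1: "card hp1 = (\<Sum>j<L. card {k\<in>{0<..<L}. hit (vtx P k) j \<and> xx k < xx j \<and> \<not> P ! k})"
    unfolding e1 by (rule card_pairs) auto
  have e2: "hp2 = {(i, j). i \<in> {..<L} \<and> j \<in> {..<L} \<and> (i, j) \<in> hp2}" unfolding hp2_def hpairs_def by auto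
  have c2a: "card hp2 = (\<Sum>j<L. card {i\<in>{..<L}. (i, j) \<in> hp2})"
    by (subst e2) (rule card_pairs, auto)
  define C where "C k = card {j. j < L \<and> hit (vtx P k) j \<and> xx j < xx k}" for k
  have pj: "card {i\<in>{..<L}. (i, j) \<in> hp2} = of_bool (P ! j) * C (Suc j)" if j: "j < L" for j
  proof (cases "P ! j")
    case False thus ?thesis unfolding hp2_def hpairs_def by simp
  next
    case True
    have sj: "Suc j < L"
    proof (rule ccontr)
      assume "\<not> Suc j < L"
      hence "j = L - 1" using j by simp
      thus False using P_last True by simp
    qed
    have lj: "lv (Suc j) = lv j - int m" using lv_Suc j True by simp
    have "{i\<in>{..<L}. (i, j) \<in> hp2} = {i. i < L \<and> \<not> P ! i \<and> i < Suc j - 1 \<and> lv i < lv (Suc j) \<and> lv (Suc j) \<le> lv (Suc i)}"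
    proof (rule set_eqI)
      fix i
      show "i \<in> {i\<in>{..<L}. (i, j) \<in> hp2} \<longleftrightarrow> i \<in> {i. i < L \<and> \<not> P ! i \<and> i < Suc j - 1 \<and> lv i < lv (Suc j) \<and> lv (Suc j) \<le> lv (Suc i)}"
      proof (cases "i < L \<and> \<not> P ! i")
        case True
        hence ls: "lv (Suc i) = lv i + int n" using lv_Suc by simp
        show ?thesis unfolding hp2_def hpairs_def using True \<open>P ! j\<close> j lj ls m0 by auto
      next
        case False thus ?thesis unfolding hp2_def hpairs_def by auto
      qed
    qed
    also have "card \<dots> = C (Suc j)" unfolding C_def
      using alternation[of "Suc j"] sj True by simp
    finally show ?thesis using True by simp
  qed
  have c2b: "card hp2 = (\<Sum>j<L. of_bool (P ! j) * C (Suc j))" unfolding c2a using pj by simp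
  have L0: "0 < L" using Lmn m0 by simp
  have "(\<Sum>j<L. of_bool (P ! j) * C (Suc j)) = (\<Sum>j<L - 1. of_bool (P ! j) * C (Suc j))"
  proof -
    have "{..<L} = insert (L - 1) {..<L - 1}" using L0 by auto
    thus ?thesis using P_last by simp
  qed
  also have "\<dots> = (\<Sum>k\<in>Suc ` {..<L - 1}. of_bool (P ! (k - 1)) * C k)"
  proof -
    have "inj_on Suc {..<L - 1}" by simp
    from sum.reindex[OF this, of "\<lambda>k. of_bool (P ! (k - 1)) * C k"]
    show ?thesis by (simp only: comp_def diff_Suc_1)
  qed
  also have "Suc ` {..<L - 1} = {0<..<L}"
  proof (rule set_eqI)
    fix x
    show "x \<in> Suc ` {..<L - 1} \<longleftrightarrow> x \<in> {0<..<L}"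
    proof
      assume "x \<in> Suc ` {..<L - 1}" thus "x \<in> {0<..<L}" by auto
    next
      assume a: "x \<in> {0<..<L}"
      hence "x = Suc (x - 1)" "x - 1 \<in> {..<L - 1}" by auto
      thus "x \<in> Suc ` {..<L - 1}" by (metis imageI)
    qed
  qed
  finally have c2: "card hp2 = (\<Sum>k\<in>{0<..<L}. of_bool (P ! (k - 1)) * C k)" using c2b by simp
  show ?thesis unfolding c c1 c2 C_def ..
qed

lemma int_card_filter: "finite A \<Longrightarrow> int (card {x\<in>A. Q x}) = (\<Sum>x\<in>A. of_bool (Q x))"
  using sum_of_bool_card[of A Q] by (simp add: of_nat_sum[symmetric])

lemma sum_subset_bool: assumes "finite B" "A \<subseteq> B" "A = {x\<in>B. Q x}"
  shows "(\<Sum>x\<in>A. f x) = (\<Sum>x\<in>B. of_bool (Q x) * f x :: int)"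
proof -
  have "(\<Sum>x\<in>A. f x) = (\<Sum>x\<in>B. if Q x then f x else 0)" unfolding assms(3)
    using assms(1) by (rule sum.inter_filter)
  also have "\<dots> = (\<Sum>x\<in>B. of_bool (Q x) * f x)" by (rule sum.cong) auto
  finally show ?thesis .
qed

lemma core_II:
  "int (card hpairs) + int (\<Sum>q\<in>Inner \<union> internal_vertices P. kval m n P q)
     - int (\<Sum>q\<in>outer_vertices P. kval m n P q) = int (\<Sum>j<L. card {q\<in>Hs j. good j q})"
proof -
  define K where "K = {0<..<L}"
  define I where "I k j = (of_bool (hit (vtx P k) j) :: int)" for k j
  have fK: "finite K" unfolding K_def by simp
  have disj: "Inner \<inter> internal_vertices P = {}"
  proof (rule equals0I)
    fix q assume "q \<in> Inner \<inter> internal_vertices P"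
    then obtain k where "q \<in> Inner" "k < L" "q = vtx P k" unfolding internal_img IntI_def by auto
    thus False using inner_props(4)[of q k] by simp
  qed
  have finI: "finite (internal_vertices P)" unfolding internal_img IntI_def by simp
  have sInner: "(\<Sum>q\<in>Inner. kval m n P q) = (\<Sum>j<L. card {q\<in>Hs j. q \<in> Inner})"
    using sum_kval_pts[OF inner_finite] inner_props by fastforce
  have sInt0: "(\<Sum>q\<in>internal_vertices P. kval m n P q) = (\<Sum>k\<in>{k. IntI k}. \<Sum>j<L. of_bool (hit (vtx P k) j))"
    unfolding internal_img by (rule sum_kval_vtx) (auto simp: IntI_def)
  have sOut0: "(\<Sum>q\<in>outer_vertices P. kval m n P q) = (\<Sum>k\<in>{k. OutI k}. \<Sum>j<L. of_bool (hit (vtx P k) j))"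
    unfolding outer_img by (rule sum_kval_vtx) (auto simp: OutI_def)
  have sInt: "int (\<Sum>q\<in>internal_vertices P. kval m n P q) = (\<Sum>j<L. \<Sum>k\<in>K. of_bool (IntI k) * I k j)"
  proof -
    have "int (\<Sum>q\<in>internal_vertices P. kval m n P q) = (\<Sum>k\<in>{k. IntI k}. \<Sum>j<L. I k j)"
      unfolding sInt0 I_def by (simp add: of_nat_sum)
    also have "\<dots> = (\<Sum>k\<in>K. of_bool (IntI k) * (\<Sum>j<L. I k j))"
      by (rule sum_subset_bool[OF fK]) (auto simp: K_def IntI_def)
    also have "\<dots> = (\<Sum>k\<in>K. \<Sum>j<L. of_bool (IntI k) * I k j)" by (simp add: sum_distrib_left)
    also have "\<dots> = (\<Sum>j<L. \<Sum>k\<in>K. of_bool (IntI k) * I k j)" by (rule sum.swap)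
    finally show ?thesis .
  qed
  have sOut: "int (\<Sum>q\<in>outer_vertices P. kval m n P q) = (\<Sum>j<L. \<Sum>k\<in>K. of_bool (OutI k) * I k j)"
  proof -
    have "int (\<Sum>q\<in>outer_vertices P. kval m n P q) = (\<Sum>k\<in>{k. OutI k}. \<Sum>j<L. I k j)"
      unfolding sOut0 I_def by (simp add: of_nat_sum)
    also have "\<dots> = (\<Sum>k\<in>K. of_bool (OutI k) * (\<Sum>j<L. I k j))"
      by (rule sum_subset_bool[OF fK]) (auto simp: K_def OutI_def)
    also have "\<dots> = (\<Sum>k\<in>K. \<Sum>j<L. of_bool (OutI k) * I k j)" by (simp add: sum_distrib_left)
    also have "\<dots> = (\<Sum>j<L. \<Sum>k\<in>K. of_bool (OutI k) * I k j)" by (rule sum.swap)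
    finally show ?thesis .
  qed
  have sHp: "int (card hpairs) = (\<Sum>j<L. \<Sum>k\<in>K. of_bool (xx k < xx j \<and> \<not> P ! k) * I k j)
     + (\<Sum>j<L. \<Sum>k\<in>K. of_bool (xx j < xx k \<and> P ! (k - 1)) * I k j)"
  proof -
    have a: "int (\<Sum>j<L. card {k\<in>K. hit (vtx P k) j \<and> xx k < xx j \<and> \<not> P ! k})
       = (\<Sum>j<L. \<Sum>k\<in>K. of_bool (xx k < xx j \<and> \<not> P ! k) * I k j)"
    proof -
      have "\<And>j. int (card {k\<in>K. hit (vtx P k) j \<and> xx k < xx j \<and> \<not> P ! k})
          = (\<Sum>k\<in>K. of_bool (xx k < xx j \<and> \<not> P ! k) * I k j)"
      proof -
        fix j
        have "card {k\<in>K. hit (vtx P k) j \<and> xx k < xx j \<and> \<not> P ! k} = (\<Sum>k\<in>K. of_bool (hit (vtx P k) j \<and> xx k < xx j \<and> \<not> P ! k))"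
          using sum_of_bool_card[OF fK] by simp
        thus "int (card {k\<in>K. hit (vtx P k) j \<and> xx k < xx j \<and> \<not> P ! k})
          = (\<Sum>k\<in>K. of_bool (xx k < xx j \<and> \<not> P ! k) * I k j)"
          unfolding I_def by (auto simp: of_nat_sum intro!: sum.cong)
      qed
      thus ?thesis by (simp add: of_nat_sum)
    qed
    have b: "int (\<Sum>k\<in>K. of_bool (P ! (k - 1)) * card {j. j < L \<and> hit (vtx P k) j \<and> xx j < xx k})
       = (\<Sum>j<L. \<Sum>k\<in>K. of_bool (xx j < xx k \<and> P ! (k - 1)) * I k j)"
    proof -
      have "\<And>k. int (of_bool (P ! (k - 1)) * card {j. j < L \<and> hit (vtx P k) j \<and> xx j < xx k})
          = (\<Sum>j<L. of_bool (xx j < xx k \<and> P ! (k - 1)) * I k j)"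
      proof -
        fix k
        have e: "{j. j < L \<and> hit (vtx P k) j \<and> xx j < xx k} = {j\<in>{..<L}. hit (vtx P k) j \<and> xx j < xx k}" by auto
        have c: "int (card {j. j < L \<and> hit (vtx P k) j \<and> xx j < xx k}) = (\<Sum>j<L. of_bool (hit (vtx P k) j \<and> xx j < xx k))"
          by (subst e) (rule int_card_filter[OF finite_lessThan])
        have "int (of_bool (P ! (k - 1)) * card {j. j < L \<and> hit (vtx P k) j \<and> xx j < xx k})
           = of_bool (P ! (k - 1)) * (\<Sum>j<L. of_bool (hit (vtx P k) j \<and> xx j < xx k))"
          by (simp only: of_nat_mult c) simp
        also have "\<dots> = (\<Sum>j<L. of_bool (P ! (k - 1)) * of_bool (hit (vtx P k) j \<and> xx j < xx k))"
          by (rule sum_distrib_left)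
        also have "\<dots> = (\<Sum>j<L. of_bool (xx j < xx k \<and> P ! (k - 1)) * I k j)"
          unfolding I_def by (rule sum.cong) auto
        finally show "int (of_bool (P ! (k - 1)) * card {j. j < L \<and> hit (vtx P k) j \<and> xx j < xx k})
          = (\<Sum>j<L. of_bool (xx j < xx k \<and> P ! (k - 1)) * I k j)" .
      qed
      hence "int (\<Sum>k\<in>K. of_bool (P ! (k - 1)) * card {j. j < L \<and> hit (vtx P k) j \<and> xx j < xx k})
         = (\<Sum>k\<in>K. \<Sum>j<L. of_bool (xx j < xx k \<and> P ! (k - 1)) * I k j)" by (simp add: of_nat_sum)
      also have "\<dots> = (\<Sum>j<L. \<Sum>k\<in>K. of_bool (xx j < xx k \<and> P ! (k - 1)) * I k j)" by (rule sum.swap)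
      finally show ?thesis .
    qed
    show ?thesis using hp_count a b unfolding K_def by simp
  qed
  have sG: "int (\<Sum>j<L. card {q\<in>Hs j. good j q}) = (\<Sum>j<L. int (card {q\<in>Hs j. q \<in> Inner}))
     + (\<Sum>j<L. \<Sum>k\<in>K. of_bool (IntI k) * I k j + of_bool (xx k < xx j \<and> \<not> P ! k) * I k j
          + of_bool (xx j < xx k \<and> P ! (k - 1)) * I k j - of_bool (OutI k) * I k j)"
  proof -
    have "\<And>j. j < L \<Longrightarrow> int (card {q\<in>Hs j. good j q}) = int (card {q\<in>Hs j. q \<in> Inner})
       + (\<Sum>k\<in>K. of_bool (IntI k) * I k j + of_bool (xx k < xx j \<and> \<not> P ! k) * I k j
          + of_bool (xx j < xx k \<and> P ! (k - 1)) * I k j - of_bool (OutI k) * I k j)"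
    proof -
      fix j assume j: "j < L"
      have "int (card {k\<in>K. hit (vtx P k) j \<and> vgood j k}) = (\<Sum>k\<in>K. of_bool (hit (vtx P k) j \<and> vgood j k))"
        by (rule int_card_filter[OF fK])
      also have "\<dots> = (\<Sum>k\<in>K. of_bool (IntI k) * I k j + of_bool (xx k < xx j \<and> \<not> P ! k) * I k j
          + of_bool (xx j < xx k \<and> P ! (k - 1)) * I k j - of_bool (OutI k) * I k j)"
      proof (rule sum.cong[OF refl])
        fix k assume k: "k \<in> K"
        show "of_bool (hit (vtx P k) j \<and> vgood j k) = of_bool (IntI k) * I k j + of_bool (xx k < xx j \<and> \<not> P ! k) * I k j
          + of_bool (xx j < xx k \<and> P ! (k - 1)) * I k j - of_bool (OutI k) * I k j"
        proof (cases "hit (vtx P k) j")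
          case True
          thus ?thesis using vgood_pt[of k j] k unfolding I_def K_def by simp
        next
          case False thus ?thesis unfolding I_def by simp
        qed
      qed
      finally show "int (card {q\<in>Hs j. good j q}) = int (card {q\<in>Hs j. q \<in> Inner})
       + (\<Sum>k\<in>K. of_bool (IntI k) * I k j + of_bool (xx k < xx j \<and> \<not> P ! k) * I k j
          + of_bool (xx j < xx k \<and> P ! (k - 1)) * I k j - of_bool (OutI k) * I k j)"
        using good_split[OF j] unfolding K_def by simp
    qed
    thus ?thesis by (simp add: of_nat_sum sum.distrib)
  qed
  have sI: "int (\<Sum>q\<in>Inner \<union> internal_vertices P. kval m n P q) =
      (\<Sum>j<L. int (card {q\<in>Hs j. q \<in> Inner})) + (\<Sum>j<L. \<Sum>k\<in>K. of_bool (IntI k) * I k j)"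
    unfolding sum.union_disjoint[OF inner_finite finI disj] sInner using sInt by (simp add: of_nat_sum)
  define A where "A j k = of_bool (IntI k) * I k j" for j k
  define B where "B j k = of_bool (xx k < xx j \<and> \<not> P ! k) * I k j" for j k
  define C where "C j k = of_bool (xx j < xx k \<and> P ! (k - 1)) * I k j" for j k
  define D where "D j k = of_bool (OutI k) * I k j" for j k
  have split: "(\<Sum>j<L. \<Sum>k\<in>K. A j k + B j k + C j k - D j k) =
     (\<Sum>j<L. \<Sum>k\<in>K. A j k) + (\<Sum>j<L. \<Sum>k\<in>K. B j k) + (\<Sum>j<L. \<Sum>k\<in>K. C j k) - (\<Sum>j<L. \<Sum>k\<in>K. D j k)"
    by (simp only: sum.distrib sum_subtractf)
  show ?thesis unfolding sG sI sOut sHp using split unfolding A_def B_def C_def D_def by linarith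
qed

lemma vstep_exists: assumes "y < n" shows "\<exists>j. j < L \<and> P ! j \<and> yy j = int y"
proof -
  have "\<exists>i\<le>L. yy i = int y + 1" using row_exists[of "int y + 1"] assms by simp
  define i0 where "i0 = (LEAST i. yy i = int y + 1)"
  have y1: "yy i0 = int y + 1" unfolding i0_def by (rule LeastI_ex) (use \<open>\<exists>i\<le>L. yy i = int y + 1\<close> in blast)
  obtain i where i: "i \<le> L" "yy i = int y + 1" using \<open>\<exists>i\<le>L. yy i = int y + 1\<close> by blast
  have i0L: "i0 \<le> L" using Least_le[of "\<lambda>i. yy i = int y + 1" i] i unfolding i0_def by simp
  have i00: "0 < i0" using y1 yy0 by (cases i0) auto
  have ne: "yy (i0 - 1) \<noteq> int y + 1" using not_less_Least[of "i0 - 1" "\<lambda>i. yy i = int y + 1"] i00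
    unfolding i0_def by simp
  have st: "yy i0 = (if P ! (i0 - 1) then yy (i0 - 1) + 1 else yy (i0 - 1))"
    using yy_Suc[of "i0 - 1"] i00 i0L by simp
  have pv: "P ! (i0 - 1)" using st ne y1 by (auto split: if_splits)
  hence "yy (i0 - 1) = int y" using st y1 by simp
  thus ?thesis using pv i00 i0L by (intro exI[of _ "i0 - 1"]) auto
qed

lemma vstep_uniq: assumes "j1 < L" "P ! j1" "j2 < L" "P ! j2" "yy j1 = yy j2" shows "j1 = j2"
proof (rule ccontr)
  assume "j1 \<noteq> j2"
  then consider "j1 < j2" | "j2 < j1" by linarith
  thus False
  proof cases
    case 1
    hence "yy (Suc j1) \<le> yy j2" using yy_mono[of "Suc j1" j2] assms by simp
    moreover have "yy (Suc j1) = yy j1 + 1" using yy_Suc[of j1] assms by simp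
    ultimately show False using assms(5) by linarith
  next
    case 2
    hence "yy (Suc j2) \<le> yy j1" using yy_mono[of "Suc j2" j1] assms by simp
    moreover have "yy (Suc j2) = yy j2 + 1" using yy_Suc[of j2] assms by simp
    ultimately show False using assms(5) by linarith
  qed
qed

definition vj :: "nat \<Rightarrow> nat" where "vj y = (THE j. j < L \<and> P ! j \<and> yy j = int y)"

lemma vj: assumes "y < n" shows "vj y < L" "P ! vj y" "yy (vj y) = int y"
proof -
  obtain j where j: "j < L" "P ! j" "yy j = int y" using vstep_exists[OF assms] by blast
  have "\<exists>!j. j < L \<and> P ! j \<and> yy j = int y"
  proof (rule ex1I[of _ j])
    show "j < L \<and> P ! j \<and> yy j = int y" using j by simp
    fix j' assume "j' < L \<and> P ! j' \<and> yy j' = int y"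
    thus "j' = j" using vstep_uniq[of j' j] j by simp
  qed
  hence "vj y < L \<and> P ! vj y \<and> yy (vj y) = int y" unfolding vj_def by (rule theI')
  thus "vj y < L" "P ! vj y" "yy (vj y) = int y" by auto
qed

lemma vj_eq: assumes "j < L" "P ! j" shows "vj (nat (yy j)) = j" "nat (yy j) < n"
proof -
  have y0: "0 \<le> yy j" using yy_ge0 assms by simp
  have "yy j < yy (Suc j)" using yy_Suc assms by simp
  moreover have "yy (Suc j) \<le> int n" using yy_le assms by simp
  ultimately show yn: "nat (yy j) < n" using y0 by simp
  have e: "yy (vj (nat (yy j))) = yy j" using vj(3)[OF yn] y0 by simp
  show "vj (nat (yy j)) = j" using vstep_uniq[OF vj(1)[OF yn] vj(2)[OF yn] assms e] .
qed

definition X :: "nat \<Rightarrow> nat" where "X y = nat (xx (vj y))"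

lemma X_int: assumes "y < n" shows "int (X y) = xx (vj y)"
proof -
  have "0 \<le> xx (vj y)" using xx_ge0[of "vj y"] vj(1)[OF assms] by simp
  thus ?thesis unfolding X_def by simp
qed

lemma vj_mono: assumes "y \<le> z" "z < n" shows "vj y \<le> vj z"
proof (rule ccontr)
  assume "\<not> vj y \<le> vj z"
  hence "Suc (vj z) \<le> vj y" by simp
  hence "yy (Suc (vj z)) \<le> yy (vj y)" using yy_mono[of "Suc (vj z)" "vj y"] vj(1)[of y] assms by simp
  moreover have "yy (Suc (vj z)) = yy (vj z) + 1" using yy_Suc[of "vj z"] vj(1,2)[of z] assms by simp
  ultimately show False using vj(3)[of z] vj(3)[of y] assms by simp
qed

lemma X_p4: "p4 m n X"
proof (unfold_locales)
  fix y z assume a: "y \<le> z" "z < n"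
  have "xx (vj y) \<le> xx (vj z)" using xx_mono[of "vj y" "vj z"] vj_mono[OF a] vj(1)[of z] a by simp
  thus "X y \<le> X z" unfolding X_def by simp
next
  fix y assume a: "y < n"
  have "lv (vj y) \<le> 0" using lv_le0[of "vj y"] vj(1)[OF a] by simp
  hence "int n * int (X y) \<le> int m * int y" unfolding lv_def using X_int[OF a] vj(3)[OF a] by simp
  thus "n * X y \<le> m * y" by (simp only: of_nat_mult[symmetric] of_nat_le_iff)
qed

lemma vj_xy: assumes "y < n" shows "vtx P (vj y) = (int (X y), int y)"
  using vtx_xy[of "vj y"] X_int[OF assms] vj(3)[OF assms] by simp

lemma above_pos: assumes "0 \<le> a" "int n * a < int m * b" shows "0 < b"
proof -
  have "0 \<le> int n * a" using assms(1) by simp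
  hence "0 < int m * b" using assms(2) by linarith
  thus ?thesis using m0 by (simp add: zero_less_mult_iff)
qed

lemma goodR_iff: assumes a: "0 \<le> a" "a < int m" and ab: "int n * a < int m * b"
  shows "goodR (a, b) \<longleftrightarrow> b < int n \<and> int (X (nat b)) \<le> a"
proof -
  have b0: "0 < b" using above_pos[OF a(1) ab] .
  show ?thesis
  proof
    assume g: "goodR (a, b)"
    show "b < int n \<and> int (X (nat b)) \<le> a"
    proof (cases "(a, b) \<in> Inner")
      case True
      hence inn: "\<And>i. i \<le> L \<Longrightarrow> xx i = a \<Longrightarrow> b < yy i"
        unfolding inner_points_def xx_def yy_def by auto
      obtain i0 where i0: "i0 \<le> L" "xx i0 = a" using col_exists a by fastforce
      have bn: "b < int n" using inn[OF i0] yy_le[OF i0(1)] by simp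
      define y where "y = nat b"
      have yn: "y < n" using bn b0 unfolding y_def by simp
      have yb: "int y = b" using b0 unfolding y_def by simp
      have "xx (vj y) \<le> a"
      proof (rule ccontr)
        assume "\<not> xx (vj y) \<le> a"
        hence "i0 < vj y" using xx_mono[of "vj y" i0] i0 by (cases "vj y \<le> i0") auto
        hence "yy i0 \<le> yy (vj y)" using yy_mono[of i0 "vj y"] vj(1)[OF yn] by simp
        thus False using inn[OF i0] vj(3)[OF yn] yb by simp
      qed
      thus ?thesis using bn X_int[OF yn] unfolding y_def by simp
    next
      case False
      then obtain k where k: "0 < k" "k < L" "P ! k" "(a, b) = vtx P k" using g unfolding goodR_def by auto
      have xy: "a = xx k" "b = yy k" using k(4) vtx_xy[of k] by auto
      have "nat (yy k) < n" "vj (nat (yy k)) = k" using vj_eq k by auto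
      thus ?thesis using xy X_int by simp
    qed
  next
    assume h: "b < int n \<and> int (X (nat b)) \<le> a"
    define y where "y = nat b"
    have "nat b < n" using h b0 by (simp add: nat_less_iff)
    hence yn: "y < n" unfolding y_def by simp
    have yb: "int y = b" using b0 unfolding y_def by simp
    define j where "j = vj y"
    have j: "j < L" "P ! j" "yy j = b" "xx j \<le> a" using vj[OF yn] X_int[OF yn] h yb unfolding j_def y_def by auto
    show "goodR (a, b)"
    proof (cases "xx j = a")
      case True
      have "vtx P j = (a, b)" using vtx_xy[of j] j True by simp
      moreover have "0 < j" using j(3) b0 yy0 by (cases j) auto
      ultimately show ?thesis unfolding goodR_def using j by auto
    next
      case False
      hence lt: "xx j < a" using j by simp
      have "\<And>i. i \<le> L \<Longrightarrow> xx i = a \<Longrightarrow> b < yy i"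
      proof -
        fix i assume i: "i \<le> L" "xx i = a"
        have "Suc j \<le> i"
        proof (rule ccontr)
          assume "\<not> Suc j \<le> i"
          hence "xx i \<le> xx j" using xx_mono[of i j] j by simp
          thus False using i lt by simp
        qed
        hence "yy (Suc j) \<le> yy i" using yy_mono i by simp
        moreover have "yy (Suc j) = b + 1" using yy_Suc[of j] j by simp
        ultimately show "b < yy i" by simp
      qed
      hence "(a, b) \<in> Inner" unfolding inner_points_def xx_def yy_def using a ab by auto
      thus ?thesis unfolding goodR_def by simp
    qed
  qed
qed

lemma goodL_iff: assumes a: "0 \<le> a" "a < int m" and ab: "int n * a < int m * b"
  shows "goodL (a, b) \<longleftrightarrow> b \<le> int n \<and> int (X (nat b - 1)) < a"
proof -
  have b0: "0 < b" using above_pos[OF a(1) ab] .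
  define y where "y = nat b - 1"
  have yb: "int y = b - 1" using b0 unfolding y_def by simp
  show ?thesis
  proof
    assume g: "goodL (a, b)"
    show "b \<le> int n \<and> int (X (nat b - 1)) < a"
    proof (cases "(a, b) \<in> Inner")
      case True
      hence inn: "\<And>i. i \<le> L \<Longrightarrow> xx i = a \<Longrightarrow> b < yy i"
        unfolding inner_points_def xx_def yy_def by auto
      obtain i0 where i0: "i0 \<le> L" "xx i0 = a" using col_exists a by fastforce
      have bn: "b < int n" using inn[OF i0] yy_le[OF i0(1)] by simp
      have yn: "y < n" using bn b0 unfolding y_def by simp
      have "xx (vj y) < a"
      proof (rule ccontr)
        assume "\<not> xx (vj y) < a"
        hence ge: "a \<le> xx (vj y)" by simp
        show False
        proof (cases "xx (vj y) = a")
          case True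
          thus False using inn[of "vj y"] vj(1,3)[OF yn] yb by simp
        next
          case False
          hence "i0 < vj y" using xx_mono[of "vj y" i0] i0 ge by (cases "vj y \<le> i0") auto
          hence "yy i0 \<le> yy (vj y)" using yy_mono[of i0 "vj y"] vj(1)[OF yn] by simp
          thus False using inn[OF i0] vj(3)[OF yn] yb by simp
        qed
      qed
      thus ?thesis using bn X_int[OF yn] unfolding y_def by simp
    next
      case False
      then obtain k where k: "0 < k" "k < L" "\<not> P ! (k - 1)" "(a, b) = vtx P k"
        using g unfolding goodL_def by auto
      have xy: "a = xx k" "b = yy k" using k(4) vtx_xy[of k] by auto
      have bn: "b \<le> int n" using xy yy_le k by simp
      have yn: "y < n" using bn b0 unfolding y_def by simp
      have "vj y < k"
      proof (rule ccontr)
        assume "\<not> vj y < k"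
        hence "yy k \<le> yy (vj y)" using yy_mono[of k "vj y"] vj(1)[OF yn] by simp
        thus False using vj(3)[OF yn] yb xy by simp
      qed
      moreover have "vj y \<noteq> k - 1" using vj(2)[OF yn] k(3) by auto
      ultimately have "Suc (vj y) \<le> k - 1" by simp
      hence "xx (Suc (vj y)) \<le> xx (k - 1)" using xx_mono k by simp
      moreover have "xx (Suc (vj y)) = xx (vj y)" using xx_Suc[of "vj y"] vj[OF yn] by simp
      moreover have "xx k = xx (k - 1) + 1" using xx_Suc[of "k - 1"] k by simp
      ultimately have "xx (vj y) < a" using xy by simp
      thus ?thesis using bn X_int[OF yn] unfolding y_def by simp
    qed
  next
    assume h: "b \<le> int n \<and> int (X (nat b - 1)) < a"
    have "nat b \<le> n" using h by (simp add: nat_le_iff)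
    moreover have "1 \<le> nat b" using b0 by simp
    ultimately have yn: "y < n" unfolding y_def by simp
    define j where "j = vj y"
    have j: "j < L" "P ! j" "yy j = b - 1" "xx j < a" using vj[OF yn] X_int[OF yn] h yb unfolding j_def y_def by auto
    have ge: "\<And>i. i \<le> L \<Longrightarrow> xx i = a \<Longrightarrow> b \<le> yy i"
    proof -
      fix i assume i: "i \<le> L" "xx i = a"
      have "Suc j \<le> i"
      proof (rule ccontr)
        assume "\<not> Suc j \<le> i"
        hence "xx i \<le> xx j" using xx_mono[of i j] j by simp
        thus False using i j by simp
      qed
      hence "yy (Suc j) \<le> yy i" using yy_mono i by simp
      moreover have "yy (Suc j) = b" using yy_Suc[of j] j by simp
      ultimately show "b \<le> yy i" by simp
    qed
    show "goodL (a, b)"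
    proof (cases "\<exists>i\<le>L. xx i = a \<and> yy i = b")
      case True
      then obtain i where i: "i \<le> L" "xx i = a" "yy i = b" by blast
      have i0: "0 < i" using i(3) b0 yy0 by (cases i) auto
      have iL: "i < L" using i xxL a by (cases "i = L") auto
      have "\<not> P ! (i - 1)"
      proof
        assume "P ! (i - 1)"
        hence "xx (i - 1) = a" "yy (i - 1) = b - 1" using xx_Suc[of "i - 1"] yy_Suc[of "i - 1"] i i0 iL by auto
        moreover have "i - 1 \<le> L" using i by simp
        ultimately show False using ge[of "i - 1"] by simp
      qed
      moreover have "(a, b) = vtx P i" using vtx_xy[of i] i by simp
      ultimately show ?thesis unfolding goodL_def using i0 iL by auto
    next
      case False
      have "\<And>i. i \<le> L \<Longrightarrow> xx i = a \<Longrightarrow> b < yy i"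
      proof -
        fix i assume i: "i \<le> L" "xx i = a"
        have "yy i \<noteq> b" using False i by blast
        thus "b < yy i" using ge[OF i] by simp
      qed
      hence "(a, b) \<in> Inner" unfolding inner_points_def xx_def yy_def using a ab by auto
      thus ?thesis unfolding goodL_def by simp
    qed
  qed
qed

sublocale p4 m n X by (rule X_p4)

lemma goodQ: assumes y: "y < n" and d: "0 < d" "d < m"
  shows "good (vj y) (Qf (vj y) d) \<longleftrightarrow> (if X y + d < m then T d y else T2 d y)"
proof -
  define j where "j = vj y"
  have j: "j < L" "P ! j" "xx j = int (X y)" "yy j = int y" using vj[OF y] X_int[OF y] unfolding j_def by auto
  have bnd: "int m * (int (dl d) - 1) < int n * int d" "int n * int d < int m * int (dl d)"
    using dl_bounds_int d by auto
  have dn: "dl d \<le> n" "1 \<le> dl d" using dl_bounds d by auto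
  have lq: "lvp (Qf j d) < 0"
  proof -
    have "lvp (Qf j d) < lv j" unfolding lvp_Qf using bnd by simp
    thus ?thesis using lv_le0[of j] j by simp
  qed
  show ?thesis
  proof (cases "X y + d < m")
    case True
    have q: "Qf j d = (int (X y) + int d, int y + int (dl d))" unfolding Qf_def using j True by simp
    have lt: "xx j < fst (Qf j d)" unfolding q using j d by simp
    have g: "good j (Qf j d) \<longleftrightarrow> goodR (Qf j d)" unfolding good_def using lt by auto
    have ab: "int n * (int (X y) + int d) < int m * (int y + int (dl d))" using lq unfolding q lvp_def by simp
    have gr: "goodR (Qf j d) \<longleftrightarrow> int y + int (dl d) < int n \<and> int (X (nat (int y + int (dl d)))) \<le> int (X y) + int d"
      unfolding q by (rule goodR_iff) (use True ab in auto)
    have "T d y \<longleftrightarrow> y + dl d < n \<and> X (y + dl d) \<le> X y + d"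
      unfolding T_def Xe_def using True by auto
    moreover have "nat (int y + int (dl d)) = y + dl d" by simp
    moreover have "(int y + int (dl d) < int n \<and> int (X (y + dl d)) \<le> int (X y) + int d) \<longleftrightarrow> (y + dl d < n \<and> X (y + dl d) \<le> X y + d)"
      by (simp add: of_nat_add[symmetric] del: of_nat_add)
    ultimately show ?thesis using g gr True unfolding j_def[symmetric] by simp
  next
    case False
    have q: "Qf j d = (int (X y) + int d - int m, int y + int (dl d) - int n)" unfolding Qf_def using j False by simp
    have lt: "fst (Qf j d) < xx j" unfolding q using j d by simp
    have g: "good j (Qf j d) \<longleftrightarrow> goodL (Qf j d)" unfolding good_def using lt by auto
    have ab: "int n * (int (X y) + int d - int m) < int m * (int y + int (dl d) - int n)" using lq unfolding q lvp_def by simp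
    have a0: "0 \<le> int (X y) + int d - int m" "int (X y) + int d - int m < int m" using False Xlt[OF y] d by auto
    have gl: "goodL (Qf j d) \<longleftrightarrow> int y + int (dl d) - int n \<le> int n \<and> int (X (nat (int y + int (dl d) - int n) - 1)) < int (X y) + int d - int m"
      unfolding q by (rule goodL_iff[OF a0 ab])
    have bpos: "0 < int y + int (dl d) - int n" using above_pos[OF a0(1) ab] .
    hence ge: "n + 1 \<le> y + dl d" by simp
    have e1: "nat (int y + int (dl d) - int n) - 1 = y + dl d - 1 - n" using ge by simp
    have "T2 d y \<longleftrightarrow> X (y + dl d - 1 - n) + m < X y + d"
      unfolding T2_def Xe_def using ge by auto
    moreover have "int y + int (dl d) - int n \<le> int n" using y dn by simp
    ultimately show ?thesis using g gl False e1 unfolding j_def[symmetric] by auto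
  qed
qed

lemma card_good_d: assumes "j < L" "P ! j"
  shows "card {q\<in>Hs j. good j q} = card {d\<in>{1..<m}. good j (Qf j d)}"
proof -
  have b: "bij_betw (Qf j) {1..<m} (Hs j)" using Qf_bij assms .
  have "{q\<in>Hs j. good j q} = Qf j ` {d\<in>{1..<m}. good j (Qf j d)}"
  proof (rule set_eqI)
    fix q
    show "q \<in> {q\<in>Hs j. good j q} \<longleftrightarrow> q \<in> Qf j ` {d\<in>{1..<m}. good j (Qf j d)}"
    proof
      assume a: "q \<in> {q\<in>Hs j. good j q}"
      then obtain d where "d \<in> {1..<m}" "q = Qf j d" using Qf_surj by blast
      thus "q \<in> Qf j ` {d\<in>{1..<m}. good j (Qf j d)}" using a by auto
    next
      assume "q \<in> Qf j ` {d\<in>{1..<m}. good j (Qf j d)}"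
      then obtain d where "d \<in> {1..<m}" "good j (Qf j d)" "q = Qf j d" by auto
      thus "q \<in> {q\<in>Hs j. good j q}" using Qf_in assms by auto
    qed
  qed
  moreover have "inj_on (Qf j) {d\<in>{1..<m}. good j (Qf j d)}"
    using b unfolding bij_betw_def by (auto intro: inj_on_subset)
  ultimately show ?thesis by (simp add: card_image)
qed

lemma vj_bij: "bij_betw vj {..<n} {j. j < L \<and> P ! j}"
proof (rule bij_betw_byWitness[of _ "\<lambda>j. nat (yy j)"])
  show "\<forall>y\<in>{..<n}. nat (yy (vj y)) = y" using vj(3) by simp
  show "\<forall>j\<in>{j. j < L \<and> P ! j}. vj (nat (yy j)) = j" using vj_eq by auto
  show "vj ` {..<n} \<subseteq> {j. j < L \<and> P ! j}" using vj by auto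
  show "(\<lambda>j. nat (yy j)) ` {j. j < L \<and> P ! j} \<subseteq> {..<n}" using vj_eq by auto
qed

lemma total_good: "(\<Sum>j<L. card {q\<in>Hs j. good j q}) = (\<Sum>d\<in>{1..<m}. cnt d)"
proof -
  have "(\<Sum>j<L. card {q\<in>Hs j. good j q}) = (\<Sum>j\<in>{j. j < L \<and> P ! j}. card {q\<in>Hs j. good j q})"
    by (rule sum.mono_neutral_right) (auto simp: Hs_empty)
  also have "\<dots> = (\<Sum>y<n. card {q\<in>Hs (vj y). good (vj y) q})"
    by (rule sum.reindex_bij_betw[OF vj_bij, symmetric])
  also have "\<dots> = (\<Sum>y<n. \<Sum>d\<in>{1..<m}. (if X y + d < m then of_bool (T d y) else of_bool (T2 d y)))"
  proof (rule sum.cong[OF refl])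
    fix y assume y: "y \<in> {..<n}"
    have "card {q\<in>Hs (vj y). good (vj y) q} = card {d\<in>{1..<m}. good (vj y) (Qf (vj y) d)}"
      using card_good_d vj y by simp
    also have "\<dots> = (\<Sum>d\<in>{1..<m}. of_bool (good (vj y) (Qf (vj y) d)))"
      using sum_of_bool_card[of "{1..<m}"] by simp
    also have "\<dots> = (\<Sum>d\<in>{1..<m}. (if X y + d < m then of_bool (T d y) else of_bool (T2 d y)))"
      by (rule sum.cong[OF refl]) (use goodQ y in auto)
    finally show "card {q\<in>Hs (vj y). good (vj y) q} = (\<Sum>d\<in>{1..<m}. (if X y + d < m then of_bool (T d y) else of_bool (T2 d y)))" .
  qed
  also have "\<dots> = (\<Sum>d\<in>{1..<m}. \<Sum>y<n. (if X y + d < m then of_bool (T d y) else of_bool (T2 d y)))"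
    by (rule sum.swap)
  also have "\<dots> = (\<Sum>d\<in>{1..<m}. cnt d)" unfolding cnt_def ..
  finally show ?thesis .
qed

lemma min_vertex: obtains k where "OutI k" "\<And>i. i \<le> L \<Longrightarrow> lv k \<le> lv i"
proof -
  have fin: "finite (lv ` {..L})" "lv ` {..L} \<noteq> {}" by auto
  have "Min (lv ` {..L}) \<in> lv ` {..L}" by (rule Min_in[OF fin])
  then obtain k where k0': "k \<in> {..L}" "Min (lv ` {..L}) = lv k" by blast
  hence k: "k \<le> L" "lv k = Min (lv ` {..L})" by auto
  have mn: "\<And>i. i \<le> L \<Longrightarrow> lv k \<le> lv i" using k Min_le[OF fin(1)] by simp
  have L0: "0 < L" using Lmn m0 by simp
  have l1: "lv 1 = - int m" using lv_Suc[of 0] P_first L0 lv0 by simp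
  have k0: "k \<noteq> 0"
  proof
    assume "k = 0"
    hence "lv 0 \<le> lv 1" using mn[of 1] L0 by simp
    thus False using l1 lv0 m0 by simp
  qed
  have kL: "k \<noteq> L" using mn[of 1] l1 lvL m0 L0 by auto
  have kk: "0 < k" "k < L" using k0 kL k by auto
  have a: "P ! (k - 1)"
  proof (rule ccontr)
    assume "\<not> P ! (k - 1)"
    hence "lv k = lv (k - 1) + int n" using lv_Suc[of "k - 1"] kk by simp
    moreover have "lv k \<le> lv (k - 1)" using mn[of "k - 1"] kk by simp
    ultimately show False using n0 by simp
  qed
  have b: "\<not> P ! k"
  proof
    assume "P ! k"
    hence "lv (Suc k) = lv k - int m" using lv_Suc[of k] kk by simp
    thus False using mn[of "Suc k"] kk m0 by simp
  qed
  show ?thesis using that[of k] kk a b mn unfolding OutI_def by simp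
qed

lemma diag_dist_eq: "diag_dist m n p = real_of_int \<bar>lvp p\<bar> / sqrt ((real m)\<^sup>2 + (real n)\<^sup>2)"
  unfolding diag_dist_def lvp_def rpt_def by simp

lemma vstar_sum: "(\<Sum>v\<in>vstar m n P. kval m n P v) = (\<Sum>v\<in>outer_vertices P. kval m n P v)"
proof -
  define M where "M = {v \<in> outer_vertices P. \<forall>w \<in> outer_vertices P. diag_dist m n w \<le> diag_dist m n v}"
  have vs: "vstar m n P = outer_vertices P - M" unfolding vstar_def M_def ..
  have fin: "finite (outer_vertices P)" unfolding outer_img OutI_def by simp
  have sub: "M \<subseteq> outer_vertices P" unfolding M_def by auto
  have z: "\<And>v. v \<in> M \<Longrightarrow> kval m n P v = 0"
  proof -
    fix v assume vM: "v \<in> M"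
    then obtain k where k: "OutI k" "v = vtx P k" unfolding M_def outer_img by auto
    obtain k' where k': "OutI k'" "\<And>i. i \<le> L \<Longrightarrow> lv k' \<le> lv i" using min_vertex by blast
    have "diag_dist m n (vtx P k') \<le> diag_dist m n v" using vM k' unfolding M_def outer_img by auto
    moreover have sq: "0 < sqrt ((real m)\<^sup>2 + (real n)\<^sup>2)" using m0 by (simp add: add_pos_nonneg)
    ultimately have "real_of_int \<bar>lv k'\<bar> \<le> real_of_int \<bar>lv k\<bar>"
      unfolding diag_dist_eq k(2) lvp_vtx by (simp add: divide_le_cancel)
    moreover have "lv k' < 0" "lv k < 0" using lv_neg k k' unfolding OutI_def by auto
    ultimately have "lv k \<le> lv k'" by simp
    hence kmin: "\<And>i. i \<le> L \<Longrightarrow> lv k \<le> lv i" using k'(2) order.trans by blast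
    have "{j. hit v j} = {}"
    proof (rule equals0I)
      fix j assume "j \<in> {j. hit v j}"
      hence h: "j < L" "P ! j" "lv (Suc j) \<le> lv k" "v \<noteq> vtx P (Suc j)" unfolding hit_def k(2) lvp_vtx by auto
      have e: "lv k = lv (Suc j)" using h kmin[of "Suc j"] by simp
      have sj: "Suc j < L"
      proof (rule ccontr)
        assume "\<not> Suc j < L"
        hence "Suc j = L" using h by simp
        thus False using e lvL \<open>lv k < 0\<close> by simp
      qed
      have "k = Suc j" using lv_inj'[of k "Suc j"] e sj k unfolding OutI_def by simp
      thus False using h k by simp
    qed
    thus "kval m n P v = 0" unfolding kval_eq by (metis card.empty)
  qed
  have "(\<Sum>v\<in>outer_vertices P. kval m n P v) = (\<Sum>v\<in>outer_vertices P - M. kval m n P v) + (\<Sum>v\<in>M. kval m n P v)"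
    using sum.subset_diff[OF sub fin] by simp
  also have "(\<Sum>v\<in>M. kval m n P v) = 0" using z by simp
  finally show ?thesis unfolding vs by simp
qed

theorem main_dpath:
  "real (h_plus m n P) - (real m - 1) * (real n - 1) / 2 - (\<Sum>v \<in> vstar m n P. real (kval m n P v))
     = - (\<Sum>p \<in> inner_points m n P \<union> internal_vertices P. real (kval m n P p))"
proof -
  have c: "int (card hpairs) + int (\<Sum>q\<in>Inner \<union> internal_vertices P. kval m n P q)
     - int (\<Sum>q\<in>outer_vertices P. kval m n P q) = int (\<Sum>d\<in>{1..<m}. cnt d)"
    using core_II total_good by simp
  have t: "2 * (\<Sum>d\<in>{1..<m}. cnt d) = (m - 1) * (n - 1)" by (rule cnt_total)
  have r: "real (card hpairs) + real (\<Sum>q\<in>Inner \<union> internal_vertices P. kval m n P q)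
     - real (\<Sum>q\<in>outer_vertices P. kval m n P q) = real (\<Sum>d\<in>{1..<m}. cnt d)"
  proof -
    have "real_of_int (int (card hpairs) + int (\<Sum>q\<in>Inner \<union> internal_vertices P. kval m n P q)
     - int (\<Sum>q\<in>outer_vertices P. kval m n P q)) = real_of_int (int (\<Sum>d\<in>{1..<m}. cnt d))"
      using c by (rule arg_cong)
    thus ?thesis by simp
  qed
  have t2: "real (\<Sum>d\<in>{1..<m}. cnt d) = (real m - 1) * (real n - 1) / 2"
  proof -
    have "real (2 * (\<Sum>d\<in>{1..<m}. cnt d)) = real ((m - 1) * (n - 1))" using t by (rule arg_cong)
    hence "2 * real (\<Sum>d\<in>{1..<m}. cnt d) = real ((m - 1) * (n - 1))" by simp
    also have "\<dots> = (real m - 1) * (real n - 1)" using m0 n0 by (simp add: of_nat_diff)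
    finally show ?thesis by simp
  qed
  show ?thesis using r t2 unfolding h_plus_eq vstar_sum[symmetric] by (simp add: of_nat_sum)
qed

end


theorem mainTheorem2:
  fixes m n :: nat and P :: "bool list"
  assumes "0 < m" and "0 < n" and "coprime m n" and "dyck_path m n P"
  shows "real (h_plus m n P) - (real m - 1) * (real n - 1) / 2
           - (\<Sum>v \<in> vstar m n P. real (kval m n P v))
         = - (\<Sum>p \<in> inner_points m n P \<union> internal_vertices P. real (kval m n P p))"
proof -
  interpret dpath m n P by unfold_locales (use assms in auto)
  show ?thesis by (rule main_dpath)
qed

end
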